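(* Consider any quantum secret sharing (QSS) scheme on $n$ parties whose access structure $\Gamma$ (the collection of authorized sets) is non-empty. Let $t_{\min}$ be the minimum integer $t$ such that every set of $t$ or more parties is authorized, and let $z_{\max}$ be the maximum integer $z$ such that every set of $z$ or fewer parties is unauthorized. Then $n\leq t_{\min}+z_{\max}$. If the QSS scheme is a pure state QSS scheme, then $n=t_{\min}+z_{\max}$.
   Context: A QSS scheme on $n$ parties is an encoding of a quantum secret into a joint state of $n$ subsystems (shares), the $j$-th share being given to party $j\in[n]=\{1,\dots,n\}$. A set $P\subseteq[n]$ of parties is authorized if the secret can be recovered from the shares of the parties in $P$, and unauthorized if the shares of the parties in $P$ contain no information about the secret. The access structure $\Gamma$ is the collection of authorized sets and the adversary structure the collection of unauthorized sets; these are disjoint, and a set may be neither (intermediate). A QSS scheme is a pure state QSS scheme if every pure state secret is encoded into a pure state of the $n$ shares. *)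

theory Defs
  imports Complex_Main
begin

text \<open>An operator on a system with computational basis indexed by a finite set A
  is a function rho :: 'a => 'a => complex (only its values on A x A matter).
  Parties are 0,...,n-1; share j has dimension dims j; the joint basis of the
  shares of a set S of parties is the set of functions x with x j < dims j for
  j in S and x j = 0 otherwise (tensor product of the share spaces).\<close>

definition basis :: "(nat \<Rightarrow> nat) \<Rightarrow> nat set \<Rightarrow> (nat \<Rightarrow> nat) set" where
  "basis dims S = {x. \<forall>j. (j \<in> S \<longrightarrow> x j < dims j) \<and> (j \<notin> S \<longrightarrow> x j = 0)}"

definition merge :: "nat set \<Rightarrow> (nat \<Rightarrow> nat) \<Rightarrow> (nat \<Rightarrow> nat) \<Rightarrow> (nat \<Rightarrow> nat)" where
  "merge P x z = (\<lambda>j. if j \<in> P then x j else z j)"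

definition ptrace :: "nat \<Rightarrow> (nat \<Rightarrow> nat) \<Rightarrow> nat set
      \<Rightarrow> ((nat \<Rightarrow> nat) \<Rightarrow> (nat \<Rightarrow> nat) \<Rightarrow> complex) \<Rightarrow> ((nat \<Rightarrow> nat) \<Rightarrow> (nat \<Rightarrow> nat) \<Rightarrow> complex)" where
  "ptrace n dims P rho = (\<lambda>x y. \<Sum>z\<in>basis dims ({..<n} - P). rho (merge P x z) (merge P y z))"

definition density :: "'a set \<Rightarrow> ('a \<Rightarrow> 'a \<Rightarrow> complex) \<Rightarrow> bool" where
  "density A rho \<longleftrightarrow>
     (\<forall>i\<in>A. \<forall>j\<in>A. rho j i = cnj (rho i j)) \<and>
     (\<forall>v. 0 \<le> Re (\<Sum>i\<in>A. \<Sum>j\<in>A. cnj (v i) * rho i j * v j)) \<and>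
     (\<Sum>i\<in>A. rho i i) = 1"

definition pure_state :: "'a set \<Rightarrow> ('a \<Rightarrow> 'a \<Rightarrow> complex) \<Rightarrow> bool" where
  "pure_state A rho \<longleftrightarrow> (\<exists>psi. (\<Sum>i\<in>A. (cmod (psi i))\<^sup>2) = 1 \<and>
       (\<forall>i\<in>A. \<forall>j\<in>A. rho i j = psi i * cnj (psi j)))"

definition is_channel :: "'a set \<Rightarrow> 'b set
      \<Rightarrow> (('a \<Rightarrow> 'a \<Rightarrow> complex) \<Rightarrow> ('b \<Rightarrow> 'b \<Rightarrow> complex)) \<Rightarrow> bool" where
  "is_channel A B Phi \<longleftrightarrow> (\<exists>(m::nat) (K :: nat \<Rightarrow> 'b \<Rightarrow> 'a \<Rightarrow> complex).
      (\<forall>i\<in>A. \<forall>j\<in>A. (\<Sum>k<m. \<Sum>x\<in>B. cnj (K k x i) * K k x j) = (if i = j then 1 else 0)) \<and>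
      (\<forall>rho. Phi rho = (\<lambda>x y. \<Sum>k<m. \<Sum>i\<in>A. \<Sum>j\<in>A. K k x i * rho i j * cnj (K k y j))))"

definition qss_scheme :: "nat \<Rightarrow> nat \<Rightarrow> (nat \<Rightarrow> nat)
      \<Rightarrow> ((nat \<Rightarrow> nat \<Rightarrow> complex) \<Rightarrow> ((nat \<Rightarrow> nat) \<Rightarrow> (nat \<Rightarrow> nat) \<Rightarrow> complex)) \<Rightarrow> bool" where
  "qss_scheme d n dims E \<longleftrightarrow> 2 \<le> d \<and> (\<forall>j<n. 1 \<le> dims j) \<and> is_channel {..<d} (basis dims {..<n}) E"

definition authorized where
  "authorized d n dims E P \<longleftrightarrow> P \<subseteq> {..<n} \<and>
     (\<exists>R. is_channel (basis dims P) {..<d} R \<and>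
        (\<forall>rho. density {..<d} rho \<longrightarrow>
           (\<forall>i<d. \<forall>j<d. R (ptrace n dims P (E rho)) i j = rho i j)))"

definition unauthorized where
  "unauthorized d n dims E P \<longleftrightarrow> P \<subseteq> {..<n} \<and>
     (\<forall>rho sigma. density {..<d} rho \<longrightarrow> density {..<d} sigma \<longrightarrow>
        (\<forall>x\<in>basis dims P. \<forall>y\<in>basis dims P.
           ptrace n dims P (E rho) x y = ptrace n dims P (E sigma) x y))"

definition access_structure where
  "access_structure d n dims E = {P. authorized d n dims E P}"

definition pure_qss where
  "pure_qss d n dims E \<longleftrightarrow> (\<forall>rho. pure_state {..<d} rho \<longrightarrow> pure_state (basis dims {..<n}) (E rho))"

definition t_min where
  "t_min d n dims E = (LEAST t::nat. \<forall>P\<subseteq>{..<n}. t \<le> card P \<longrightarrow> authorized d n dims E P)"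

definition z_max where
  "z_max d n dims E = (GREATEST z::nat. \<forall>P\<subseteq>{..<n}. card P \<le> z \<longrightarrow> unauthorized d n dims E P)"

end

theory Submission
  imports Defs "HOL-Library.FuncSet"
begin

lemma basis_finite:
  assumes "finite S" shows "finite (basis dims S)"
proof -
  have "basis dims S \<subseteq> (\<lambda>f j. if j \<in> S then f j else 0) ` PiE S (\<lambda>j. {..<dims j})"
  proof
    fix x assume x: "x \<in> basis dims S"
    have "restrict x S \<in> PiE S (\<lambda>j. {..<dims j})" using x by (auto simp: basis_def PiE_iff)
    moreover have "x = (\<lambda>j. if j \<in> S then restrict x S j else 0)"
      using x by (auto simp: basis_def)
    ultimately show "x \<in> (\<lambda>f j. if j \<in> S then f j else 0) ` PiE S (\<lambda>j. {..<dims j})" by blast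
  qed
  moreover have "finite (PiE S (\<lambda>j. {..<dims j}))" using assms by (simp add: finite_PiE)
  ultimately show ?thesis using finite_subset by blast
qed

lemma merge_basis:
  "x \<in> basis dims P \<Longrightarrow> z \<in> basis dims Q \<Longrightarrow> merge P x z \<in> basis dims (P \<union> Q)"
  by (auto simp: basis_def merge_def)

lemma merge_swap:
  "x \<in> basis dims P \<Longrightarrow> z \<in> basis dims Q \<Longrightarrow> P \<inter> Q = {} \<Longrightarrow> merge Q z x = merge P x z"
  by (auto simp: basis_def merge_def fun_eq_iff)

lemma merge_bij:
  assumes "P \<inter> Q = {}"
  shows "bij_betw (\<lambda>(x,z). merge P x z) (basis dims P \<times> basis dims Q) (basis dims (P \<union> Q))"
  unfolding bij_betw_def
proof
  show "inj_on (\<lambda>(x, z). merge P x z) (basis dims P \<times> basis dims Q)"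
  proof (rule inj_onI, clarify)
    fix x z x' z' assume h: "x \<in> basis dims P" "z \<in> basis dims Q" "x' \<in> basis dims P" "z' \<in> basis dims Q"
      and e: "merge P x z = merge P x' z'"
    show "x = x' \<and> z = z'"
    proof
      show "x = x'"
      proof
        fix j show "x j = x' j" using h e[THEN fun_cong, of j] by (auto simp: basis_def merge_def split: if_splits)
      qed
      show "z = z'"
      proof
        fix j show "z j = z' j" using h e[THEN fun_cong, of j] assms by (cases "j \<in> P") (auto simp: basis_def merge_def disjoint_iff split: if_splits)
      qed
    qed
  qed
  show "(\<lambda>(x, z). merge P x z) ` (basis dims P \<times> basis dims Q) = basis dims (P \<union> Q)"
  proof
    show "(\<lambda>(x, z). merge P x z) ` (basis dims P \<times> basis dims Q) \<subseteq> basis dims (P \<union> Q)"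
      using merge_basis by fast
    show "basis dims (P \<union> Q) \<subseteq> (\<lambda>(x, z). merge P x z) ` (basis dims P \<times> basis dims Q)"
    proof
      fix X assume X: "X \<in> basis dims (P \<union> Q)"
      let ?x = "\<lambda>j. if j \<in> P then X j else 0" and ?z = "\<lambda>j. if j \<in> P then 0 else X j"
      have "?x \<in> basis dims P" using X by (auto simp: basis_def)
      moreover have "?z \<in> basis dims Q" using X assms by (auto simp: basis_def)
      moreover have "X = merge P ?x ?z" by (auto simp: merge_def)
      ultimately show "X \<in> (\<lambda>(x, z). merge P x z) ` (basis dims P \<times> basis dims Q)" by force
    qed
  qed
qed

lemma sum_split:
  assumes "P \<inter> Q = {}" "finite P" "finite Q"
  shows "(\<Sum>X\<in>basis dims (P \<union> Q). f X) = (\<Sum>x\<in>basis dims P. \<Sum>z\<in>basis dims Q. f (merge P x z))"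
proof -
  have "(\<Sum>X\<in>basis dims (P \<union> Q). f X) = (\<Sum>p\<in>basis dims P \<times> basis dims Q. f ((\<lambda>(x,z). merge P x z) p))"
    using sum.reindex_bij_betw[OF merge_bij[OF assms(1)], of f] by simp
  also have "\<dots> = (\<Sum>x\<in>basis dims P. \<Sum>z\<in>basis dims Q. f (merge P x z))"
    by (simp add: sum.cartesian_product prod.case_distrib)
  finally show ?thesis .
qed

lemma sum_split_N:
  assumes "P \<subseteq> {..<n}"
  shows "(\<Sum>X\<in>basis dims {..<n}. f X) = (\<Sum>x\<in>basis dims P. \<Sum>z\<in>basis dims ({..<n} - P). f (merge P x z))"
proof -
  have "P \<union> ({..<n} - P) = {..<n}" using assms by auto
  moreover have "finite P" using assms finite_subset by blast
  ultimately show ?thesis using sum_split[of P "{..<n} - P", where dims=dims and f=f] by auto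
qed

lemma compl_compl: "P \<subseteq> {..<n} \<Longrightarrow> {..<n} - ({..<n} - P) = P" by auto



definition kmap :: "nat \<Rightarrow> (nat \<Rightarrow> 'b \<Rightarrow> 'a \<Rightarrow> complex) \<Rightarrow> 'a set \<Rightarrow> ('a \<Rightarrow> 'a \<Rightarrow> complex) \<Rightarrow> 'b \<Rightarrow> 'b \<Rightarrow> complex" where
  "kmap m K A \<rho> = (\<lambda>x y. \<Sum>k<m. \<Sum>i\<in>A. \<Sum>j\<in>A. K k x i * \<rho> i j * cnj (K k y j))"

definition ket :: "'a \<Rightarrow> 'a \<Rightarrow> complex" where "ket i = (\<lambda>k. if k = i then 1 else 0)"
definition proj :: "('a \<Rightarrow> complex) \<Rightarrow> 'a \<Rightarrow> 'a \<Rightarrow> complex" where "proj \<psi> = (\<lambda>i j. \<psi> i * cnj (\<psi> j))"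
definition ip :: "'a set \<Rightarrow> ('a \<Rightarrow> complex) \<Rightarrow> ('a \<Rightarrow> complex) \<Rightarrow> complex" where
  "ip B f g = (\<Sum>x\<in>B. cnj (f x) * g x)"

lemma is_channel_iff:
  "is_channel A B \<Phi> \<longleftrightarrow> (\<exists>m K. (\<forall>i\<in>A. \<forall>j\<in>A. (\<Sum>k<m. \<Sum>x\<in>B. cnj (K k x i) * K k x j) = (if i = j then 1 else 0))
      \<and> \<Phi> = kmap m K A)"
  unfolding is_channel_def kmap_def by (auto simp: fun_eq_iff)

lemma kmap_proj:
  "kmap m K A (proj \<psi>) x y = (\<Sum>k<m. (\<Sum>i\<in>A. K k x i * \<psi> i) * cnj (\<Sum>j\<in>A. K k y j * \<psi> j))"
  unfolding kmap_def proj_def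
  by (simp add: sum_product mult_ac)

lemma kmap_add:
  "kmap m K A (\<lambda>x y. \<rho> x y + \<sigma> x y) a b = kmap m K A \<rho> a b + kmap m K A \<sigma> a b"
  unfolding kmap_def by (simp add: sum.distrib ring_distribs)

lemma kmap_sum:
  assumes "finite C"
  shows "kmap m K A (\<lambda>x y. \<Sum>c\<in>C. \<rho> c x y) a b = (\<Sum>c\<in>C. kmap m K A (\<rho> c) a b)"
  using assms
proof (induction C rule: finite_induct)
  case empty then show ?case by (simp add: kmap_def)
next
  case (insert c C)
  have "kmap m K A (\<lambda>x y. \<Sum>c\<in>insert c C. \<rho> c x y) a b = kmap m K A (\<lambda>x y. \<rho> c x y + (\<Sum>c\<in>C. \<rho> c x y)) a b"
    using insert by simp
  also have "\<dots> = kmap m K A (\<rho> c) a b + kmap m K A (\<lambda>x y. \<Sum>c\<in>C. \<rho> c x y) a b"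
    using kmap_add[of m K A "\<rho> c" "\<lambda>x y. \<Sum>c\<in>C. \<rho> c x y"] by simp
  finally show ?case using insert by simp
qed

lemma kmap_mix:
  assumes "finite C"
  shows "kmap m K A (\<lambda>x y. \<Sum>c\<in>C. u c x * cnj (u c y)) a b
     = (\<Sum>c\<in>C. \<Sum>k<m. (\<Sum>x\<in>A. K k a x * u c x) * cnj (\<Sum>y\<in>A. K k b y * u c y))"
proof -
  have "(\<lambda>x y. \<Sum>c\<in>C. u c x * cnj (u c y)) = (\<lambda>x y. \<Sum>c\<in>C. proj (u c) x y)" by (simp add: proj_def)
  then show ?thesis using kmap_sum[OF assms, of m K A "\<lambda>c. proj (u c)" a b] by (simp add: kmap_proj)
qed

lemma sum_ket: "finite A \<Longrightarrow> i \<in> A \<Longrightarrow> (\<Sum>k\<in>A. f k * ket i k) = f i"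
  by (simp add: ket_def if_distrib cong: if_cong)

lemma cmod_sq: "z * cnj z = complex_of_real ((cmod z)\<^sup>2)"
  by (rule complex_norm_square[symmetric])

lemma sum_sq_zero:
  assumes "finite S" "(\<Sum>\<alpha>\<in>S. f \<alpha> * cnj (f \<alpha>)) = 0" "\<alpha> \<in> S"
  shows "f \<alpha> = 0"
proof -
  have "complex_of_real (\<Sum>\<alpha>\<in>S. (cmod (f \<alpha>))\<^sup>2) = 0" using assms(2) by (simp only: cmod_sq of_real_sum)
  then have "(\<Sum>\<alpha>\<in>S. (cmod (f \<alpha>))\<^sup>2) = 0" by (metis of_real_eq_0_iff)
  then have "(cmod (f \<alpha>))\<^sup>2 = 0"
    using sum_nonneg_eq_0_iff[OF assms(1), of "\<lambda>\<alpha>. (cmod (f \<alpha>))\<^sup>2"] assms(3) by simp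
  then show ?thesis by simp
qed

lemma pure_density:
  assumes "finite A" "(\<Sum>i\<in>A. (cmod (\<psi> i))\<^sup>2) = 1"
  shows "density A (proj \<psi>)"
  unfolding density_def
proof (intro conjI ballI allI)
  fix i j show "proj \<psi> j i = cnj (proj \<psi> i j)" by (simp add: proj_def)
next
  fix v :: "'a \<Rightarrow> complex"
  let ?s = "\<Sum>i\<in>A. cnj (v i) * \<psi> i"
  have "(\<Sum>i\<in>A. \<Sum>j\<in>A. cnj (v i) * proj \<psi> i j * v j) = ?s * cnj ?s"
    by (simp add: proj_def sum_product mult_ac)
  also have "\<dots> = complex_of_real ((cmod ?s)\<^sup>2)" by (rule cmod_sq)
  finally show "0 \<le> Re (\<Sum>i\<in>A. \<Sum>j\<in>A. cnj (v i) * proj \<psi> i j * v j)" by (simp only: Re_complex_of_real) simp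
next
  have "(\<Sum>i\<in>A. proj \<psi> i i) = complex_of_real (\<Sum>i\<in>A. (cmod (\<psi> i))\<^sup>2)"
    by (simp only: proj_def cmod_sq of_real_sum)
  then show "(\<Sum>i\<in>A. proj \<psi> i i) = 1" using assms(2) by simp
qed

lemma ket_norm: "finite A \<Longrightarrow> i \<in> A \<Longrightarrow> (\<Sum>k\<in>A. (cmod (ket i k))\<^sup>2) = 1"
proof -
  assume "finite A" "i \<in> A"
  have "\<And>k. (cmod (ket i k))\<^sup>2 = (if k = i then 1 else 0)" by (simp add: ket_def)
  then show ?thesis using \<open>finite A\<close> \<open>i \<in> A\<close> by simp
qed

lemma scalar_lemma:
  fixes M :: "'s \<Rightarrow> nat \<Rightarrow> nat \<Rightarrow> complex"
  assumes fin: "finite S" and d: "0 < d"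
    and H: "\<And>\<psi> a b. (\<Sum>i<d. (cmod (\<psi> i))\<^sup>2) = 1 \<Longrightarrow> a < d \<Longrightarrow> b < d \<Longrightarrow>
        (\<Sum>\<alpha>\<in>S. (\<Sum>i<d. M \<alpha> a i * \<psi> i) * cnj (\<Sum>j<d. M \<alpha> b j * \<psi> j)) = \<psi> a * cnj (\<psi> b)"
  shows "\<forall>\<alpha>\<in>S. \<forall>a<d. \<forall>i<d. M \<alpha> a i = (if a = i then M \<alpha> 0 0 else 0)"
    and "(\<Sum>\<alpha>\<in>S. M \<alpha> 0 0 * cnj (M \<alpha> 0 0)) = 1"
proof -
  have E1: "(\<Sum>\<alpha>\<in>S. M \<alpha> a i * cnj (M \<alpha> b i)) = ket i a * cnj (ket i b)"
    if "i < d" "a < d" "b < d" for i a b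
    using H[of "ket i" a b] that ket_norm[of "{..<d}" i] sum_ket[of "{..<d}" i] by simp
  have off: "M \<alpha> a i = 0" if "\<alpha> \<in> S" "a < d" "i < d" "a \<noteq> i" for \<alpha> a i
    using sum_sq_zero[OF fin _ that(1), of "\<lambda>\<alpha>. M \<alpha> a i"] E1[of i a a] that by (simp add: ket_def)
  have diag: "(\<Sum>\<alpha>\<in>S. M \<alpha> i i * cnj (M \<alpha> i i)) = 1" if "i < d" for i
    using E1[of i i i] that by (simp add: ket_def)
  have cross: "(\<Sum>\<alpha>\<in>S. M \<alpha> i i * cnj (M \<alpha> j j)) = 1" if "i < d" "j < d" "i \<noteq> j" for i j
  proof -
    define r :: complex where "r = complex_of_real (1 / sqrt 2)"
    define \<psi> where "\<psi> = (\<lambda>k. r * (ket i k + ket j k))"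
    have r2: "(1 / complex_of_real (sqrt 2))\<^sup>2 = 1/2"
      by (simp add: power_divide flip: of_real_power)
    have rr: "r * cnj r = 1/2" using r2 by (simp add: r_def power2_eq_square[symmetric])
    have cr: "(cmod (1 / complex_of_real (sqrt 2)))\<^sup>2 = 1/2"
      by (simp add: norm_divide power_divide)
    have sq: "(cmod (\<psi> k))\<^sup>2 = (if k = i then 1/2 else 0) + (if k = j then 1/2 else 0)" for k
    proof (cases "k = i")
      case True then show ?thesis using that by (simp add: \<psi>_def ket_def r_def norm_divide power_divide)
    next
      case False then show ?thesis by (cases "k = j") (simp_all add: \<psi>_def ket_def r_def norm_divide power_divide)
    qed
    have nrm: "(\<Sum>k<d. (cmod (\<psi> k))\<^sup>2) = 1"
    proof -
      have "(\<Sum>k<d. (cmod (\<psi> k))\<^sup>2) = (\<Sum>k<d. (if k = i then 1/2 else 0)) + (\<Sum>k<d. (if k = j then (1/2::real) else 0))"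
        by (simp only: sq sum.distrib)
      also have "\<dots> = 1" by (simp only: sum.delta finite_lessThan lessThan_iff \<open>i<d\<close> \<open>j<d\<close> if_True)
      finally show ?thesis .
    qed
    have app: "(\<Sum>k<d. M \<alpha> a k * \<psi> k) = r * M \<alpha> a a" if "\<alpha> \<in> S" "a < d" "a = i \<or> a = j" for \<alpha> a
    proof -
      have "(\<Sum>k<d. M \<alpha> a k * \<psi> k) = r * (\<Sum>k<d. M \<alpha> a k * ket i k) + r * (\<Sum>k<d. M \<alpha> a k * ket j k)"
        by (simp add: \<psi>_def sum_distrib_left sum.distrib ring_distribs mult_ac)
      also have "\<dots> = r * M \<alpha> a i + r * M \<alpha> a j" using \<open>i<d\<close> \<open>j<d\<close> by (simp add: sum_ket)
      also have "\<dots> = r * M \<alpha> a a" using that off[of \<alpha> a i] off[of \<alpha> a j] \<open>i<d\<close> \<open>j<d\<close> \<open>i\<noteq>j\<close> by auto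
      finally show ?thesis .
    qed
    have "(\<Sum>\<alpha>\<in>S. (r * M \<alpha> i i) * cnj (r * M \<alpha> j j)) = \<psi> i * cnj (\<psi> j)"
      using H[OF nrm \<open>i<d\<close> \<open>j<d\<close>] app[of _ i] app[of _ j] \<open>i<d\<close> \<open>j<d\<close> by simp
    also have "\<dots> = r * cnj r" using \<open>i\<noteq>j\<close> by (simp add: \<psi>_def ket_def)
    finally have "r * cnj r * (\<Sum>\<alpha>\<in>S. M \<alpha> i i * cnj (M \<alpha> j j)) = r * cnj r"
      by (simp add: sum_distrib_left mult_ac)
    then show ?thesis using rr by simp
  qed
  have eqd: "M \<alpha> i i = M \<alpha> j j" if "\<alpha> \<in> S" "i < d" "j < d" for \<alpha> i j
  proof (cases "i = j")
    case False
    have c2: "(\<Sum>\<alpha>\<in>S. M \<alpha> j j * cnj (M \<alpha> i i)) = 1"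
      using cross[of j i] that False by simp
    have "(\<Sum>\<alpha>\<in>S. (M \<alpha> i i - M \<alpha> j j) * cnj (M \<alpha> i i - M \<alpha> j j))
       = (\<Sum>\<alpha>\<in>S. M \<alpha> i i * cnj (M \<alpha> i i)) - (\<Sum>\<alpha>\<in>S. M \<alpha> i i * cnj (M \<alpha> j j))
         - (\<Sum>\<alpha>\<in>S. M \<alpha> j j * cnj (M \<alpha> i i)) + (\<Sum>\<alpha>\<in>S. M \<alpha> j j * cnj (M \<alpha> j j))"
      by (simp add: sum.distrib sum_subtractf ring_distribs)
    also have "\<dots> = 0" using diag[of i] diag[of j] cross[of i j] c2 that False by simp
    finally show ?thesis using sum_sq_zero[OF fin _ that(1), of "\<lambda>\<alpha>. M \<alpha> i i - M \<alpha> j j"] by simp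
  qed simp
  show "\<forall>\<alpha>\<in>S. \<forall>a<d. \<forall>i<d. M \<alpha> a i = (if a = i then M \<alpha> 0 0 else 0)"
  proof (intro ballI allI impI)
    fix \<alpha> a i assume h: "\<alpha> \<in> S" "a < d" "i < d"
    show "M \<alpha> a i = (if a = i then M \<alpha> 0 0 else 0)"
    proof (cases "a = i")
      case True then show ?thesis using eqd[of \<alpha> i 0] h d by simp
    next
      case False then show ?thesis using off[of \<alpha> a i] h by simp
    qed
  qed
  show "(\<Sum>\<alpha>\<in>S. M \<alpha> 0 0 * cnj (M \<alpha> 0 0)) = 1" using diag d by simp
qed



lemma ip_cnj: "ip B g f = cnj (ip B f g)"
  by (simp add: ip_def mult.commute)

lemma ip_lin2:
  assumes "finite S"
  shows "ip B f (\<lambda>x. \<Sum>s\<in>S. c s * g s x) = (\<Sum>s\<in>S. c s * ip B f (g s))"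
  unfolding ip_def by (simp add: sum_distrib_left mult_ac sum.swap[of _ B S])

lemma ip_diff2: "ip B f (\<lambda>x. g x - h x) = ip B f g - ip B f h"
  unfolding ip_def by (simp add: ring_distribs sum_subtractf)

lemma ip_add2: "ip B f (\<lambda>x. g x + h x) = ip B f g + ip B f h"
  unfolding ip_def by (simp add: ring_distribs sum.distrib)

lemma ip_scal2: "ip B f (\<lambda>x. c * g x) = c * ip B f g"
  unfolding ip_def by (simp add: sum_distrib_left mult_ac)

lemma ip_scal1: "ip B (\<lambda>x. c * g x) f = cnj c * ip B g f"
  unfolding ip_def by (simp add: sum_distrib_left mult_ac)

lemma ip_cong2: "(\<And>x. x \<in> B \<Longrightarrow> g x = g' x) \<Longrightarrow> ip B f g = ip B f g'"
  unfolding ip_def by (rule sum.cong) auto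

lemma ip_cong1: "(\<And>x. x \<in> B \<Longrightarrow> g x = g' x) \<Longrightarrow> ip B g f = ip B g' f"
  unfolding ip_def by (rule sum.cong) auto

lemma ip_self: "ip B f f = complex_of_real (\<Sum>x\<in>B. (cmod (f x))\<^sup>2)"
  unfolding ip_def by (simp only: of_real_sum) (rule sum.cong, simp, metis cmod_sq mult.commute)

lemma ip_self_zero:
  assumes "finite B" "ip B f f = 0" "x \<in> B" shows "f x = 0"
  using sum_sq_zero[OF assms(1) _ assms(3), of f] assms(2) by (simp add: ip_def mult.commute)

lemma gram_schmidt:
  fixes u :: "'z \<Rightarrow> 'b \<Rightarrow> complex"
  assumes finB: "finite B" and finZ: "finite Z"
  shows "\<exists>(r::nat) fs cs. (\<forall>s<r. \<forall>t<r. ip B (fs s) (fs t) = (if s = t then 1 else 0)) \<and>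
     (\<forall>s<r. \<forall>x\<in>B. fs s x = (\<Sum>z\<in>Z. cs s z * u z x)) \<and>
     (\<forall>z\<in>Z. \<forall>x\<in>B. u z x = (\<Sum>s<r. ip B (fs s) (u z) * fs s x))"
  using finZ
proof (induction Z rule: finite_induct)
  case empty
  show ?case by (rule_tac x=0 in exI) simp
next
  case (insert z0 Z)
  obtain r fs cs where on: "\<forall>s<(r::nat). \<forall>t<r. ip B (fs s) (fs t) = (if s = t then 1 else 0)"
    and sp: "\<forall>s<r. \<forall>x\<in>B. fs s x = (\<Sum>z\<in>Z. cs s z * u z x)"
    and ex: "\<forall>z\<in>Z. \<forall>x\<in>B. u z x = (\<Sum>s<r. ip B (fs s) (u z) * fs s x)"
    using insert.IH by blast
  define a where "a s = ip B (fs s) (u z0)" for s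
  define w where "w x = u z0 x - (\<Sum>s<r. a s * fs s x)" for x
  have orth_w: "ip B (fs s) w = 0" if "s < r" for s
  proof -
    have "ip B (fs s) w = a s - (\<Sum>t<r. a t * ip B (fs s) (fs t))"
      unfolding w_def[abs_def] by (simp add: ip_diff2 ip_lin2 a_def)
    also have "\<dots> = a s - (\<Sum>t<r. a t * (if s = t then 1 else 0))"
      using on that by simp
    also have "\<dots> = 0" using that by (simp add: if_distrib cong: if_cong)
    finally show ?thesis .
  qed
  define cs0 where "cs0 s z = (if z = z0 then 0 else cs s z)" for s z
  have sp0: "fs s x = (\<Sum>z\<in>insert z0 Z. cs0 s z * u z x)" if "s < r" "x \<in> B" for s x
  proof -
    have "(\<Sum>z\<in>insert z0 Z. cs0 s z * u z x) = (\<Sum>z\<in>Z. cs0 s z * u z x)"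
      using insert by (simp add: cs0_def)
    also have "\<dots> = (\<Sum>z\<in>Z. cs s z * u z x)"
      using insert by (intro sum.cong) (auto simp: cs0_def)
    finally show ?thesis using sp that by simp
  qed
  show ?case
  proof (cases "\<forall>x\<in>B. w x = 0")
    case True
    show ?thesis
    proof (intro exI conjI)
      show "\<forall>s<r. \<forall>t<r. ip B (fs s) (fs t) = (if s = t then 1 else 0)" by (rule on)
      show "\<forall>s<r. \<forall>x\<in>B. fs s x = (\<Sum>z\<in>insert z0 Z. cs0 s z * u z x)" using sp0 by blast
      show "\<forall>z\<in>insert z0 Z. \<forall>x\<in>B. u z x = (\<Sum>s<r. ip B (fs s) (u z) * fs s x)"
        using ex True by (auto simp: w_def a_def)
    qed
  next
    case False
    then obtain x0 where "x0 \<in> B" "w x0 \<noteq> 0" by blast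
    define nw where "nw = (\<Sum>x\<in>B. (cmod (w x))\<^sup>2)"
    have ipw: "ip B w w = complex_of_real nw" by (simp add: nw_def ip_self)
    have "nw \<noteq> 0"
    proof
      assume "nw = 0"
      then have "ip B w w = 0" using ipw by simp
      then show False using ip_self_zero[OF finB _ \<open>x0 \<in> B\<close>] \<open>w x0 \<noteq> 0\<close> by blast
    qed
    moreover have "nw \<ge> 0" unfolding nw_def by (simp add: sum_nonneg)
    ultimately have nwpos: "nw > 0" by simp
    define c where "c = complex_of_real (1 / sqrt nw)"
    have cc: "cnj c * c * complex_of_real nw = 1"
      using nwpos by (simp add: c_def flip: of_real_mult)
    define fr where "fr x = c * w x" for x
    define fs' where "fs' = fs(r := fr)"
    define cs' where "cs' s z = (if s < r then cs0 s z else (if z = z0 then c else - c * (\<Sum>t<r. a t * cs t z)))" for s z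
    have fs'_lt: "fs' s = fs s" if "s < r" for s using that by (simp add: fs'_def)
    have fs'_r: "fs' r = fr" by (simp add: fs'_def)
    have ip_fr_fs: "ip B fr (fs s) = 0" if "s < r" for s
      using orth_w[OF that] by (simp add: fr_def[abs_def] ip_scal1 ip_cnj[of B "fs s"])
    have ip_fs_fr: "ip B (fs s) fr = 0" if "s < r" for s
      using orth_w[OF that] by (simp add: fr_def[abs_def] ip_scal2)
    have ip_fr_fr: "ip B fr fr = 1"
      using cc by (simp add: fr_def[abs_def] ip_scal1 ip_scal2 ipw mult_ac)
    show ?thesis
    proof (intro exI conjI)
      show "\<forall>s<Suc r. \<forall>t<Suc r. ip B (fs' s) (fs' t) = (if s = t then 1 else 0)"
      proof (intro allI impI)
        fix s t assume "s < Suc r" "t < Suc r"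
        then consider "s < r" "t < r" | "s < r" "t = r" | "s = r" "t < r" | "s = r" "t = r" by linarith
        then show "ip B (fs' s) (fs' t) = (if s = t then 1 else 0)"
          by cases (use on fs'_lt fs'_r ip_fr_fs ip_fs_fr ip_fr_fr in auto)
      qed
      show "\<forall>s<Suc r. \<forall>x\<in>B. fs' s x = (\<Sum>z\<in>insert z0 Z. cs' s z * u z x)"
      proof (intro allI impI ballI)
        fix s x assume s: "s < Suc r" and x: "x \<in> B"
        show "fs' s x = (\<Sum>z\<in>insert z0 Z. cs' s z * u z x)"
        proof (cases "s < r")
          case True then show ?thesis using sp0[OF True x] fs'_lt by (simp add: cs'_def)
        next
          case False
          then have sr: "s = r" using s by simp
          have "(\<Sum>z\<in>insert z0 Z. cs' s z * u z x) = c * u z0 x + (\<Sum>z\<in>Z. cs' s z * u z x)"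
            using insert sr by (simp add: cs'_def)
          also have "(\<Sum>z\<in>Z. cs' s z * u z x) = (\<Sum>z\<in>Z. - c * (\<Sum>t<r. a t * cs t z) * u z x)"
            using insert sr by (intro sum.cong) (auto simp: cs'_def)
          also have "\<dots> = - c * (\<Sum>t<r. a t * (\<Sum>z\<in>Z. cs t z * u z x))"
            by (simp add: sum_distrib_left sum_distrib_right mult_ac sum.swap[of _ Z])
          also have "(\<Sum>t<r. a t * (\<Sum>z\<in>Z. cs t z * u z x)) = (\<Sum>t<r. a t * fs t x)"
            using sp x by (intro sum.cong) auto
          finally show ?thesis using sr fs'_r by (simp add: fr_def w_def ring_distribs)
        qed
      qed
      show "\<forall>z\<in>insert z0 Z. \<forall>x\<in>B. u z x = (\<Sum>s<Suc r. ip B (fs' s) (u z) * fs' s x)"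
      proof (intro ballI)
        fix z x assume z: "z \<in> insert z0 Z" and x: "x \<in> B"
        have split: "(\<Sum>s<Suc r. ip B (fs' s) (u z) * fs' s x) = (\<Sum>s<r. ip B (fs s) (u z) * fs s x) + ip B fr (u z) * fr x"
          using fs'_lt fs'_r by simp
        show "u z x = (\<Sum>s<Suc r. ip B (fs' s) (u z) * fs' s x)"
        proof (cases "z = z0")
          case True
          have "ip B fr (u z0) = ip B fr (\<lambda>x. w x + (\<Sum>s<r. a s * fs s x))"
            by (rule ip_cong2) (simp add: w_def)
          also have "\<dots> = ip B fr w" using ip_fr_fs by (simp add: ip_add2 ip_lin2)
          also have "\<dots> = cnj c * complex_of_real nw" by (simp add: fr_def[abs_def] ip_scal1 ipw)
          finally have "ip B fr (u z0) * fr x = w x" using cc by (simp add: fr_def mult_ac)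
          then show ?thesis using split True by (simp add: w_def a_def)
        next
          case False
          then have zZ: "z \<in> Z" using z by simp
          have "ip B fr (u z) = ip B fr (\<lambda>x. \<Sum>s<r. ip B (fs s) (u z) * fs s x)"
            using ex zZ by (intro ip_cong2) auto
          also have "\<dots> = 0" using ip_fr_fs by (simp add: ip_lin2)
          finally show ?thesis using split ex zZ x by simp
        qed
      qed
    qed
  qed
qed



lemma resol:
  assumes fB: "finite B" and fD: "finite D"
    and C: "\<forall>x\<in>B. \<forall>x'\<in>B. (\<Sum>l<mL. \<Sum>a\<in>D. cnj (L l a x) * L l a x') = (if x = x' then 1 else 0)"
  shows "(\<Sum>l<mL. \<Sum>a\<in>D. (\<Sum>x\<in>B. L l a x * g x) * cnj (\<Sum>x\<in>B. L l a x * h x)) = (\<Sum>x\<in>B. g x * cnj (h x))"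
proof -
  have "(\<Sum>l<mL. \<Sum>a\<in>D. (\<Sum>x\<in>B. L l a x * g x) * cnj (\<Sum>x\<in>B. L l a x * h x))
      = (\<Sum>l<mL. \<Sum>a\<in>D. \<Sum>x\<in>B. \<Sum>x'\<in>B. g x * cnj (h x') * (cnj (L l a x') * L l a x))"
    by (simp add: sum_product mult_ac)
  also have "\<dots> = (\<Sum>x\<in>B. \<Sum>x'\<in>B. g x * cnj (h x') * (\<Sum>l<mL. \<Sum>a\<in>D. cnj (L l a x') * L l a x))"
    by (simp only: sum_distrib_left sum.swap[of _ "{..<mL}" B] sum.swap[of _ D B])
  also have "\<dots> = (\<Sum>x\<in>B. \<Sum>x'\<in>B. g x * cnj (h x') * (if x' = x then 1 else 0))"
    using C by (intro sum.cong refl) simp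
  also have "\<dots> = (\<Sum>x\<in>B. g x * cnj (h x))"
    using fB by (simp add: if_distrib cong: if_cong)
  finally show ?thesis .
qed

lemma kmap_cong:
  "(\<And>x y. x \<in> A \<Longrightarrow> y \<in> A \<Longrightarrow> \<rho> x y = \<sigma> x y) \<Longrightarrow> kmap m K A \<rho> = kmap m K A \<sigma>"
  unfolding kmap_def by (intro ext sum.cong refl) auto

locale qss =
  fixes d n :: nat and dims :: "nat \<Rightarrow> nat" and m :: nat
    and K :: "nat \<Rightarrow> (nat \<Rightarrow> nat) \<Rightarrow> nat \<Rightarrow> complex"
  assumes d2: "2 \<le> d"
    and Kc: "\<forall>i\<in>{..<d}. \<forall>j\<in>{..<d}. (\<Sum>k<m. \<Sum>x\<in>basis dims {..<n}. cnj (K k x i) * K k x j) = (if i = j then 1 else 0)"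
begin

abbreviation "E \<equiv> kmap m K {..<d}"

lemma finBN: "finite (basis dims {..<n})" by (simp add: basis_finite)

lemma finBP: "P \<subseteq> {..<n} \<Longrightarrow> finite (basis dims P)"
  using basis_finite finite_subset by blast

lemma finBQ: "finite (basis dims ({..<n} - P))" by (simp add: basis_finite)

lemma trace_E:
  assumes "density {..<d} \<rho>"
  shows "(\<Sum>X\<in>basis dims {..<n}. E \<rho> X X) = 1"
proof -
  have "(\<Sum>X\<in>basis dims {..<n}. E \<rho> X X)
     = (\<Sum>i<d. \<Sum>j<d. \<rho> i j * (\<Sum>k<m. \<Sum>X\<in>basis dims {..<n}. cnj (K k X j) * K k X i))"
    unfolding kmap_def
    by (simp only: sum_distrib_left sum.swap[of _ "basis dims {..<n}" "{..<m}"]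
        sum.swap[of _ "basis dims {..<n}" "{..<d}"] sum.swap[of _ "{..<m}" "{..<d}"])
       (simp add: mult_ac)
  also have "\<dots> = (\<Sum>i<d. \<Sum>j<d. \<rho> i j * (if j = i then 1 else 0))"
    using Kc by (intro sum.cong refl) simp
  also have "\<dots> = (\<Sum>i<d. \<rho> i i)" by (simp add: if_distrib cong: if_cong)
  also have "\<dots> = 1" using assms unfolding density_def by blast
  finally show ?thesis .
qed

lemma empty_unauth: "unauthorized d n dims E {}"
  unfolding unauthorized_def
proof (intro conjI allI impI ballI)
  fix \<rho> \<sigma> x y assume r: "density {..<d} \<rho>" and s: "density {..<d} \<sigma>"
    and x: "x \<in> basis dims {}" and y: "y \<in> basis dims {}"
  have m: "merge {} x z = z" "merge {} y z = z" for z by (auto simp: merge_def)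
  show "ptrace n dims {} (E \<rho>) x y = ptrace n dims {} (E \<sigma>) x y"
    unfolding ptrace_def using trace_E[OF r] trace_E[OF s] by (simp add: m)
qed simp

lemma ket_density: "i < d \<Longrightarrow> density {..<d} (proj (ket i))"
  by (rule pure_density) (auto intro: ket_norm)

lemma get_R:
  assumes "authorized d n dims E P"
  obtains mL L where "P \<subseteq> {..<n}"
    "\<forall>x\<in>basis dims P. \<forall>x'\<in>basis dims P. (\<Sum>l<mL. \<Sum>a\<in>{..<d}. cnj (L l a x) * L l a x') = (if x = x' then 1 else 0)"
    "\<And>\<rho> a b. density {..<d} \<rho> \<Longrightarrow> a < d \<Longrightarrow> b < d \<Longrightarrow> kmap mL L (basis dims P) (ptrace n dims P (E \<rho>)) a b = \<rho> a b"
proof -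
  from assms obtain R where P: "P \<subseteq> {..<n}" and R: "is_channel (basis dims P) {..<d} R"
    and rec: "\<forall>\<rho>. density {..<d} \<rho> \<longrightarrow> (\<forall>i<d. \<forall>j<d. R (ptrace n dims P (E \<rho>)) i j = \<rho> i j)"
    unfolding authorized_def by blast
  from R obtain mL L where C: "\<forall>x\<in>basis dims P. \<forall>x'\<in>basis dims P. (\<Sum>l<mL. \<Sum>a\<in>{..<d}. cnj (L l a x) * L l a x') = (if x = x' then 1 else 0)"
    and RL: "R = kmap mL L (basis dims P)"
    unfolding is_channel_iff by blast
  show ?thesis
  proof (rule that[OF P C])
    fix \<rho> a b assume h: "density {..<d} \<rho>" "a < d" "b < d"
    have "R (ptrace n dims P (E \<rho>)) a b = \<rho> a b" using rec h by blast
    then show "kmap mL L (basis dims P) (ptrace n dims P (E \<rho>)) a b = \<rho> a b" using RL by simp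
  qed
qed

lemma not_auth_unauth:
  assumes "authorized d n dims E P" "unauthorized d n dims E P"
  shows False
proof -
  obtain L mL where P: "P \<subseteq> {..<n}"
    and C: "\<forall>x\<in>basis dims P. \<forall>x'\<in>basis dims P. (\<Sum>l<mL. \<Sum>a\<in>{..<d}. cnj (L l a x) * L l a x') = (if x = x' then 1 else 0)"
    and rec: "\<And>\<rho> a b. density {..<d} \<rho> \<Longrightarrow> a < d \<Longrightarrow> b < d \<Longrightarrow> kmap mL L (basis dims P) (ptrace n dims P (E \<rho>)) a b = \<rho> a b"
    by (rule get_R[OF assms(1)]) blast
  have d0: "0 < d" "1 < d" using d2 by auto
  have D0: "density {..<d} (proj (ket 0))" and D1: "density {..<d} (proj (ket 1))"
    using ket_density d0 by auto
  have eq: "ptrace n dims P (E (proj (ket 0))) x y = ptrace n dims P (E (proj (ket 1))) x y"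
    if "x \<in> basis dims P" "y \<in> basis dims P" for x y
    using assms(2) D0 D1 that unfolding unauthorized_def by blast
  have "kmap mL L (basis dims P) (ptrace n dims P (E (proj (ket 0)))) = kmap mL L (basis dims P) (ptrace n dims P (E (proj (ket 1))))"
    by (rule kmap_cong) (rule eq)
  then have "proj (ket (0::nat)) 0 0 = proj (ket (1::nat)) 0 0"
    using rec[OF D0 d0(1) d0(1)] rec[OF D1 d0(1) d0(1)] by simp
  then show False by (simp add: proj_def ket_def)
qed

lemma auth_struct:
  assumes "authorized d n dims E P"
  obtains mL L c where "P \<subseteq> {..<n}"
    "\<forall>x\<in>basis dims P. \<forall>x'\<in>basis dims P. (\<Sum>l<mL. \<Sum>a\<in>{..<d}. cnj (L l a x) * L l a x') = (if x = x' then 1 else 0)"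
    "\<And>\<rho> a b. density {..<d} \<rho> \<Longrightarrow> a < d \<Longrightarrow> b < d \<Longrightarrow> kmap mL L (basis dims P) (ptrace n dims P (E \<rho>)) a b = \<rho> a b"
    "\<forall>l<mL. \<forall>z\<in>basis dims ({..<n} - P). \<forall>k<m. \<forall>a<d. \<forall>i<d.
        (\<Sum>x\<in>basis dims P. L l a x * K k (merge P x z) i) = (if a = i then c l z k else 0)"
    "(\<Sum>\<alpha>\<in>{..<mL} \<times> (basis dims ({..<n} - P) \<times> {..<m}). c (fst \<alpha>) (fst (snd \<alpha>)) (snd (snd \<alpha>)) * cnj (c (fst \<alpha>) (fst (snd \<alpha>)) (snd (snd \<alpha>)))) = 1"
proof -
  obtain L mL where P: "P \<subseteq> {..<n}"
    and C: "\<forall>x\<in>basis dims P. \<forall>x'\<in>basis dims P. (\<Sum>l<mL. \<Sum>a\<in>{..<d}. cnj (L l a x) * L l a x') = (if x = x' then 1 else 0)"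
    and rec: "\<And>\<rho> a b. density {..<d} \<rho> \<Longrightarrow> a < d \<Longrightarrow> b < d \<Longrightarrow> kmap mL L (basis dims P) (ptrace n dims P (E \<rho>)) a b = \<rho> a b"
    by (rule get_R[OF assms]) blast
  let ?BP = "basis dims P" and ?BQ = "basis dims ({..<n} - P)"
  define S where "S = {..<mL} \<times> (?BQ \<times> {..<m})"
  define M where "M \<alpha> a i = (\<Sum>x\<in>?BP. L (fst \<alpha>) a x * K (snd (snd \<alpha>)) (merge P x (fst (snd \<alpha>))) i)" for \<alpha> a i
  have finBP': "finite ?BP" using finBP[OF P] .
  have finS: "finite S" unfolding S_def using finBQ by simp
  have H: "(\<Sum>\<alpha>\<in>S. (\<Sum>i<d. M \<alpha> a i * \<psi> i) * cnj (\<Sum>j<d. M \<alpha> b j * \<psi> j)) = \<psi> a * cnj (\<psi> b)"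
    if nrm: "(\<Sum>i<d. (cmod (\<psi> i))\<^sup>2) = 1" and ab: "a < d" "b < d" for \<psi> a b
  proof -
    define u where "u c x = (\<Sum>i<d. K (snd c) (merge P x (fst c)) i * \<psi> i)" for c x
    have dens: "density {..<d} (proj \<psi>)" using pure_density[of "{..<d}" \<psi>] nrm by simp
    have pt: "ptrace n dims P (E (proj \<psi>)) = (\<lambda>x y. \<Sum>c\<in>?BQ \<times> {..<m}. u c x * cnj (u c y))"
      unfolding ptrace_def kmap_proj u_def by (simp add: sum.cartesian_product split_def)
    have "\<psi> a * cnj (\<psi> b) = kmap mL L ?BP (ptrace n dims P (E (proj \<psi>))) a b"
      using rec[OF dens ab] by (simp add: proj_def)
    also have "\<dots> = (\<Sum>c\<in>?BQ \<times> {..<m}. \<Sum>l<mL. (\<Sum>x\<in>?BP. L l a x * u c x) * cnj (\<Sum>y\<in>?BP. L l b y * u c y))"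
      unfolding pt using finBQ by (simp add: kmap_mix)
    also have "\<dots> = (\<Sum>l<mL. \<Sum>c\<in>?BQ \<times> {..<m}. (\<Sum>x\<in>?BP. L l a x * u c x) * cnj (\<Sum>y\<in>?BP. L l b y * u c y))"
      by (rule sum.swap)
    also have "\<dots> = (\<Sum>\<alpha>\<in>S. (\<Sum>x\<in>?BP. L (fst \<alpha>) a x * u (snd \<alpha>) x) * cnj (\<Sum>y\<in>?BP. L (fst \<alpha>) b y * u (snd \<alpha>) y))"
      unfolding S_def by (simp add: sum.cartesian_product split_def)
    also have "\<dots> = (\<Sum>\<alpha>\<in>S. (\<Sum>i<d. M \<alpha> a i * \<psi> i) * cnj (\<Sum>j<d. M \<alpha> b j * \<psi> j))"
    proof -
      have "(\<Sum>x\<in>?BP. L (fst \<alpha>) a' x * u (snd \<alpha>) x) = (\<Sum>i<d. M \<alpha> a' i * \<psi> i)" for \<alpha> a'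
        unfolding u_def M_def
        by (simp only: sum_distrib_left sum_distrib_right sum.swap[of _ ?BP "{..<d}"]) (simp add: mult_ac)
      then show ?thesis by simp
    qed
    finally show ?thesis by simp
  qed
  have d0: "0 < d" using d2 by simp
  note SL = scalar_lemma[OF finS d0 H]
  define c where "c l z k = M (l, z, k) 0 0" for l z k
  show ?thesis
  proof (rule that[OF P C rec])
    show "\<forall>l<mL. \<forall>z\<in>?BQ. \<forall>k<m. \<forall>a<d. \<forall>i<d.
        (\<Sum>x\<in>?BP. L l a x * K k (merge P x z) i) = (if a = i then c l z k else 0)"
    proof (intro allI impI ballI)
      fix l z k a i assume "l < mL" "z \<in> ?BQ" "k < m" "a < d" "i < d"
      then have "(l, z, k) \<in> S" by (simp add: S_def)
      then have "M (l, z, k) a i = (if a = i then M (l, z, k) 0 0 else 0)"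
        using SL(1) \<open>a<d\<close> \<open>i<d\<close> by blast
      then show "(\<Sum>x\<in>?BP. L l a x * K k (merge P x z) i) = (if a = i then c l z k else 0)"
        by (simp add: M_def c_def)
    qed
    show "(\<Sum>\<alpha>\<in>{..<mL} \<times> (?BQ \<times> {..<m}). c (fst \<alpha>) (fst (snd \<alpha>)) (snd (snd \<alpha>)) * cnj (c (fst \<alpha>) (fst (snd \<alpha>)) (snd (snd \<alpha>)))) = 1"
      using SL(2) by (simp add: c_def S_def)
  qed
qed

lemma auth_compl_unauth:
  assumes "authorized d n dims E P"
  shows "unauthorized d n dims E ({..<n} - P)"
proof -
  obtain mL L c where P: "P \<subseteq> {..<n}"
    and C: "\<forall>x\<in>basis dims P. \<forall>x'\<in>basis dims P. (\<Sum>l<mL. \<Sum>a\<in>{..<d}. cnj (L l a x) * L l a x') = (if x = x' then 1 else 0)"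
    and rec: "\<And>\<rho> a b. density {..<d} \<rho> \<Longrightarrow> a < d \<Longrightarrow> b < d \<Longrightarrow> kmap mL L (basis dims P) (ptrace n dims P (E \<rho>)) a b = \<rho> a b"
    and Mc: "\<forall>l<mL. \<forall>z\<in>basis dims ({..<n} - P). \<forall>k<m. \<forall>a<d. \<forall>i<d.
        (\<Sum>x\<in>basis dims P. L l a x * K k (merge P x z) i) = (if a = i then c l z k else 0)"
    and "(\<Sum>\<alpha>\<in>{..<mL} \<times> (basis dims ({..<n} - P) \<times> {..<m}). c (fst \<alpha>) (fst (snd \<alpha>)) (snd (snd \<alpha>)) * cnj (c (fst \<alpha>) (fst (snd \<alpha>)) (snd (snd \<alpha>)))) = 1"
    by (rule auth_struct[OF assms]) blast
  let ?BP = "basis dims P" and ?Q = "{..<n} - P"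
  let ?BQ = "basis dims ?Q"
  have finBP': "finite ?BP" using finBP[OF P] .
  define Cf where "Cf z z' k = (\<Sum>l<mL. c l z k * cnj (c l z' k))" for z z' k
  have key: "(\<Sum>x\<in>?BP. K k (merge P x z) i * cnj (K k (merge P x z') j)) = (if i = j then Cf z z' k else 0)"
    if "z \<in> ?BQ" "z' \<in> ?BQ" "k < m" "i < d" "j < d" for z z' k i j
  proof -
    have "(\<Sum>x\<in>?BP. K k (merge P x z) i * cnj (K k (merge P x z') j))
        = (\<Sum>l<mL. \<Sum>a\<in>{..<d}. (\<Sum>x\<in>?BP. L l a x * K k (merge P x z) i) * cnj (\<Sum>x\<in>?BP. L l a x * K k (merge P x z') j))"
      by (rule resol[OF finBP' _ C, symmetric]) simp
    also have "\<dots> = (\<Sum>l<mL. \<Sum>a\<in>{..<d}. (if a = i then c l z k else 0) * cnj (if a = j then c l z' k else 0))"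
      using Mc that by (intro sum.cong refl) simp
    also have "\<dots> = (\<Sum>l<mL. \<Sum>a\<in>{..<d}. if a = i then (if i = j then c l z k * cnj (c l z' k) else 0) else 0)"
      by (intro sum.cong refl) auto
    also have "\<dots> = (if i = j then Cf z z' k else 0)"
      using that by (cases "i = j") (simp_all add: Cf_def)
    finally show ?thesis .
  qed
  have val: "ptrace n dims ?Q (E \<rho>) z z' = (\<Sum>k<m. Cf z z' k)"
    if dens: "density {..<d} \<rho>" and z: "z \<in> ?BQ" "z' \<in> ?BQ" for \<rho> z z'
  proof -
    have mg: "merge ?Q w x = merge P x w" if "x \<in> ?BP" "w \<in> ?BQ" for x w
      using merge_swap[OF that(2) that(1)] by (simp add: Int_commute Diff_disjoint)
    have "ptrace n dims ?Q (E \<rho>) z z' = (\<Sum>x\<in>?BP. E \<rho> (merge P x z) (merge P x z'))"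
      unfolding ptrace_def compl_compl[OF P] using mg z by (intro sum.cong refl) simp
    also have "\<dots> = (\<Sum>k<m. \<Sum>i<d. \<Sum>j<d. \<rho> i j * (\<Sum>x\<in>?BP. K k (merge P x z) i * cnj (K k (merge P x z') j)))"
      unfolding kmap_def
      by (simp only: sum_distrib_left sum.swap[of _ ?BP "{..<m}"] sum.swap[of _ ?BP "{..<d}"]) (simp add: mult_ac)
    also have "\<dots> = (\<Sum>k<m. \<Sum>i<d. \<Sum>j<d. \<rho> i j * (if i = j then Cf z z' k else 0))"
      using key z by (intro sum.cong refl) simp
    also have "\<dots> = (\<Sum>k<m. (\<Sum>i<d. \<rho> i i) * Cf z z' k)"
      by (simp add: if_distrib sum_distrib_right cong: if_cong)
    also have "(\<Sum>i<d. \<rho> i i) = 1" using dens unfolding density_def by blast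
    finally show ?thesis by simp
  qed
  show ?thesis unfolding unauthorized_def using val by auto
qed

end



lemma ip_diff1: "ip B (\<lambda>x. f x - g x) h = ip B f h - ip B g h"
  unfolding ip_def by (simp add: ring_distribs sum_subtractf)

lemma sum_lessThan_add: "(\<Sum>l<r + (N::nat). f l) = (\<Sum>l<r. f l) + (\<Sum>t<N. f (r + t))"
  by (induction N) (simp_all add: add.assoc)

lemma rank_one_parallel:
  fixes u :: "nat \<Rightarrow> 'b \<Rightarrow> complex"
  assumes fB: "finite B" and nphi: "ip B \<phi> \<phi> = 1"
    and R1: "\<forall>X\<in>B. \<forall>Y\<in>B. (\<Sum>k<m. u k X * cnj (u k Y)) = \<phi> X * cnj (\<phi> Y)"
    and k0: "k0 < m" and X: "X \<in> B"
  shows "u k0 X = ip B \<phi> (u k0) * \<phi> X"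
proof -
  have gen: "(\<Sum>k<m. ip B v (u k) * cnj (ip B v (u k))) = ip B v \<phi> * cnj (ip B v \<phi>)" for v
  proof -
    have pk: "ip B v (u k) * cnj (ip B v (u k)) = (\<Sum>X\<in>B. \<Sum>Y\<in>B. cnj (v X) * v Y * (u k X * cnj (u k Y)))" for k
      unfolding ip_def cnj_sum sum_product by (simp add: mult_ac)
    have "(\<Sum>k<m. ip B v (u k) * cnj (ip B v (u k))) = (\<Sum>k<m. \<Sum>X\<in>B. \<Sum>Y\<in>B. cnj (v X) * v Y * (u k X * cnj (u k Y)))"
      by (simp only: pk)
    also have "\<dots> = (\<Sum>X\<in>B. \<Sum>Y\<in>B. cnj (v X) * v Y * (\<Sum>k<m. u k X * cnj (u k Y)))"
      by (simp only: sum_distrib_left sum.swap[of _ "{..<m}" B])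
    also have "\<dots> = (\<Sum>X\<in>B. \<Sum>Y\<in>B. cnj (v X) * v Y * (\<phi> X * cnj (\<phi> Y)))"
      using R1 by (intro sum.cong refl) simp
    also have "\<dots> = ip B v \<phi> * cnj (ip B v \<phi>)"
      unfolding ip_def cnj_sum sum_product by (simp add: mult_ac)
    finally show ?thesis .
  qed
  define \<beta> where "\<beta> = ip B \<phi> (u k0)"
  define v where "v X = u k0 X - \<beta> * \<phi> X" for X
  have "ip B v \<phi> = ip B (u k0) \<phi> - cnj \<beta> * ip B \<phi> \<phi>"
    unfolding v_def[abs_def] by (simp add: ip_diff1 ip_scal1)
  also have "\<dots> = 0" using nphi by (simp add: \<beta>_def ip_cnj[of B "u k0"])
  finally have v0: "ip B v \<phi> = 0" .
  have "(\<Sum>k<m. ip B v (u k) * cnj (ip B v (u k))) = 0" using gen[of v] v0 by simp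
  then have vu: "ip B v (u k0) = 0" using sum_sq_zero[of "{..<m}" "\<lambda>k. ip B v (u k)" k0] k0 by simp
  have "ip B v v = ip B v (u k0) - \<beta> * ip B v \<phi>"
    unfolding v_def[abs_def] by (simp add: ip_diff2 ip_scal2)
  then have "ip B v v = 0" using vu v0 by simp
  then have "v X = 0" using ip_self_zero[OF fB _ X] by simp
  then show ?thesis by (simp add: v_def \<beta>_def)
qed

context qss
begin

lemma pure_parallel:
  assumes pure: "pure_qss d n dims E" and i: "i < d"
  obtains \<phi> \<beta> where "\<forall>k<m. \<forall>X\<in>basis dims {..<n}. K k X i = \<beta> k * \<phi> X"
proof -
  have ps: "pure_state {..<d} (proj (ket i))"
    unfolding pure_state_def using ket_norm[of "{..<d}" i] i by (auto simp: proj_def)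
  then have "pure_state (basis dims {..<n}) (E (proj (ket i)))" using pure unfolding pure_qss_def by blast
  then obtain \<phi> where n1: "(\<Sum>X\<in>basis dims {..<n}. (cmod (\<phi> X))\<^sup>2) = 1"
    and eq: "\<forall>X\<in>basis dims {..<n}. \<forall>Y\<in>basis dims {..<n}. E (proj (ket i)) X Y = \<phi> X * cnj (\<phi> Y)"
    unfolding pure_state_def by blast
  have nphi: "ip (basis dims {..<n}) \<phi> \<phi> = 1" using n1 by (simp add: ip_self)
  have E1: "E (proj (ket i)) X Y = (\<Sum>k<m. K k X i * cnj (K k Y i))" for X Y
    using i by (simp add: kmap_proj sum_ket)
  have R1: "\<forall>X\<in>basis dims {..<n}. \<forall>Y\<in>basis dims {..<n}. (\<Sum>k<m. K k X i * cnj (K k Y i)) = \<phi> X * cnj (\<phi> Y)"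
    using eq E1 by simp
  show ?thesis
  proof (rule that[of "\<lambda>k. ip (basis dims {..<n}) \<phi> (\<lambda>X. K k X i)" \<phi>], intro allI impI ballI)
    fix k X assume "k < m" "X \<in> basis dims {..<n}"
    then show "K k X i = ip (basis dims {..<n}) \<phi> (\<lambda>X. K k X i) * \<phi> X"
      using rank_one_parallel[where u="\<lambda>k X. K k X i", OF finBN nphi R1] by simp
  qed
qed

lemma pure_iso:
  assumes pure: "pure_qss d n dims E" and auth: "authorized d n dims E P0"
  obtains V where "\<forall>i<d. \<forall>j<d. (\<Sum>X\<in>basis dims {..<n}. cnj (V X i) * V X j) = (if i = j then 1 else 0)"
    and "\<And>\<rho> X Y. X \<in> basis dims {..<n} \<Longrightarrow> Y \<in> basis dims {..<n} \<Longrightarrow>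
          E \<rho> X Y = (\<Sum>i<d. \<Sum>j<d. V X i * \<rho> i j * cnj (V Y j))"
proof -
  obtain L mL c where P0: "P0 \<subseteq> {..<n}"
    and "\<forall>x\<in>basis dims P0. \<forall>x'\<in>basis dims P0. (\<Sum>l<mL. \<Sum>a\<in>{..<d}. cnj (L l a x) * L l a x') = (if x = x' then 1 else 0)"
    and "\<And>\<rho> a b. density {..<d} \<rho> \<Longrightarrow> a < d \<Longrightarrow> b < d \<Longrightarrow> kmap mL L (basis dims P0) (ptrace n dims P0 (E \<rho>)) a b = \<rho> a b"
    and Mc: "\<forall>l<mL. \<forall>z\<in>basis dims ({..<n} - P0). \<forall>k<m. \<forall>a<d. \<forall>i<d.
        (\<Sum>x\<in>basis dims P0. L l a x * K k (merge P0 x z) i) = (if a = i then c l z k else 0)"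
    and cs: "(\<Sum>\<alpha>\<in>{..<mL} \<times> (basis dims ({..<n} - P0) \<times> {..<m}). c (fst \<alpha>) (fst (snd \<alpha>)) (snd (snd \<alpha>)) * cnj (c (fst \<alpha>) (fst (snd \<alpha>)) (snd (snd \<alpha>)))) = 1"
    by (rule auth_struct[OF auth]) blast
  let ?S = "{..<mL} \<times> (basis dims ({..<n} - P0) \<times> {..<m})"
  obtain \<alpha>0 where a0: "\<alpha>0 \<in> ?S" "c (fst \<alpha>0) (fst (snd \<alpha>0)) (snd (snd \<alpha>0)) \<noteq> 0"
  proof (rule ccontr)
    assume "\<not> ?thesis"
    then have Z: "\<forall>\<alpha>\<in>?S. c (fst \<alpha>) (fst (snd \<alpha>)) (snd (snd \<alpha>)) = 0" using that by blast
    have "(\<Sum>\<alpha>\<in>?S. c (fst \<alpha>) (fst (snd \<alpha>)) (snd (snd \<alpha>)) * cnj (c (fst \<alpha>) (fst (snd \<alpha>)) (snd (snd \<alpha>)))) = 0"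
    proof (rule sum.neutral, intro ballI)
      fix \<alpha> assume "\<alpha> \<in> ?S"
      then have "c (fst \<alpha>) (fst (snd \<alpha>)) (snd (snd \<alpha>)) = 0" using Z by blast
      then show "c (fst \<alpha>) (fst (snd \<alpha>)) (snd (snd \<alpha>)) * cnj (c (fst \<alpha>) (fst (snd \<alpha>)) (snd (snd \<alpha>))) = 0" by simp
    qed
    then show False using cs by simp
  qed
  define l0 where "l0 = fst \<alpha>0"
  define z0 where "z0 = fst (snd \<alpha>0)"
  define k0 where "k0 = snd (snd \<alpha>0)"
  have l0: "l0 < mL" and z0: "z0 \<in> basis dims ({..<n} - P0)" and k0: "k0 < m"
    using a0(1) by (auto simp: l0_def z0_def k0_def)
  define \<gamma> where "\<gamma> k = c l0 z0 k" for k
  have g0: "\<gamma> k0 \<noteq> 0" using a0(2) by (simp add: \<gamma>_def l0_def z0_def k0_def)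
  have lin: "K k X i * \<gamma> k0 = \<gamma> k * K k0 X i"
    if k: "k < m" and X: "X \<in> basis dims {..<n}" and i: "i < d" for k X i
  proof -
    obtain \<phi> \<beta> where par: "\<forall>k<m. \<forall>X\<in>basis dims {..<n}. K k X i = \<beta> k * \<phi> X"
      by (rule pure_parallel[OF pure i])
    define w where "w = (\<Sum>x\<in>basis dims P0. L l0 i x * \<phi> (merge P0 x z0))"
    have mb: "merge P0 x z0 \<in> basis dims {..<n}" if "x \<in> basis dims P0" for x
      using merge_basis[OF that z0] P0 by (metis Diff_partition)
    have gw: "\<gamma> k' = \<beta> k' * w" if "k' < m" for k'
    proof -
      have "\<gamma> k' = (\<Sum>x\<in>basis dims P0. L l0 i x * K k' (merge P0 x z0) i)"
        using Mc l0 z0 that i by (simp add: \<gamma>_def)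
      also have "\<dots> = (\<Sum>x\<in>basis dims P0. L l0 i x * (\<beta> k' * \<phi> (merge P0 x z0)))"
        using par that mb by (intro sum.cong refl) simp
      also have "\<dots> = \<beta> k' * w" unfolding w_def by (simp add: sum_distrib_left mult_ac)
      finally show ?thesis .
    qed
    show ?thesis using par k k0 X gw[OF k] gw[OF k0] by simp
  qed
  define g where "g = (\<Sum>k<m. (cmod (\<gamma> k))\<^sup>2)"
  have gpos: "g > 0"
  proof -
    have "(cmod (\<gamma> k0))\<^sup>2 \<le> g" unfolding g_def using k0 by (intro member_le_sum) auto
    moreover have "(cmod (\<gamma> k0))\<^sup>2 > 0" using g0 by simp
    ultimately show ?thesis by linarith
  qed
  define sg where "sg = complex_of_real (sqrt g)"
  have sg0: "sg \<noteq> 0" using gpos by (simp add: sg_def)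
  have sgsq: "sg * cnj sg = complex_of_real g" using gpos by (simp add: sg_def flip: of_real_mult)
  define V where "V X i = K k0 X i * (sg / \<gamma> k0)" for X i
  define e where "e k = \<gamma> k / sg" for k
  have KV: "K k X i = e k * V X i" if "k < m" "X \<in> basis dims {..<n}" "i < d" for k X i
  proof -
    have "e k * V X i = (K k0 X i * \<gamma> k) / \<gamma> k0" using sg0 by (simp add: e_def V_def)
    also have "\<dots> = K k X i" using lin[OF that] g0 by (simp add: field_simps)
    finally show ?thesis by simp
  qed
  have esum: "(\<Sum>k<m. e k * cnj (e k)) = 1"
  proof -
    have "(\<Sum>k<m. e k * cnj (e k)) = (\<Sum>k<m. \<gamma> k * cnj (\<gamma> k)) / (sg * cnj sg)"
      by (simp add: e_def sum_divide_distrib)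
    also have "(\<Sum>k<m. \<gamma> k * cnj (\<gamma> k)) = complex_of_real g"
      unfolding g_def by (simp only: cmod_sq of_real_sum)
    finally show ?thesis using sgsq gpos by simp
  qed
  show ?thesis
  proof (rule that)
    show "\<forall>i<d. \<forall>j<d. (\<Sum>X\<in>basis dims {..<n}. cnj (V X i) * V X j) = (if i = j then 1 else 0)"
    proof (intro allI impI)
      fix i j assume ij: "i < d" "j < d"
      have "(if i = j then 1 else 0) = (\<Sum>k<m. \<Sum>X\<in>basis dims {..<n}. cnj (K k X i) * K k X j)"
        using Kc ij by simp
      also have "\<dots> = (\<Sum>k<m. \<Sum>X\<in>basis dims {..<n}. e k * cnj (e k) * (cnj (V X i) * V X j))"
        using KV ij by (intro sum.cong refl) (simp add: mult_ac)
      also have "\<dots> = (\<Sum>k<m. e k * cnj (e k)) * (\<Sum>X\<in>basis dims {..<n}. cnj (V X i) * V X j)"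
        by (simp only: sum_product)
      finally show "(\<Sum>X\<in>basis dims {..<n}. cnj (V X i) * V X j) = (if i = j then 1 else 0)"
        using esum by simp
    qed
  next
    fix \<rho> X Y assume XY: "X \<in> basis dims {..<n}" "Y \<in> basis dims {..<n}"
    have "E \<rho> X Y = (\<Sum>k<m. \<Sum>i<d. \<Sum>j<d. e k * cnj (e k) * (V X i * \<rho> i j * cnj (V Y j)))"
      unfolding kmap_def using KV XY by (intro sum.cong refl) (simp add: mult_ac)
    also have "\<dots> = (\<Sum>k<m. e k * cnj (e k)) * (\<Sum>i<d. \<Sum>j<d. V X i * \<rho> i j * cnj (V Y j))"
      by (subst sum_distrib_right) (simp only: sum_distrib_left)
    finally show "E \<rho> X Y = (\<Sum>i<d. \<Sum>j<d. V X i * \<rho> i j * cnj (V Y j))" using esum by simp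
  qed
qed

end



lemma sum_ket2:
  assumes "finite D" "i \<in> D" "j \<in> D"
  shows "(\<Sum>b\<in>D. (c1 * ket i b + c2 * ket j b) * f b) = c1 * f i + c2 * f j"
proof -
  have "(\<Sum>b\<in>D. (c1 * ket i b + c2 * ket j b) * f b) = c1 * (\<Sum>b\<in>D. f b * ket i b) + c2 * (\<Sum>b\<in>D. f b * ket j b)"
    by (simp add: ring_distribs sum.distrib sum_distrib_left mult_ac)
  then show ?thesis using assms by (simp add: sum_ket)
qed

lemma cnj_ket: "cnj (ket i b) = ket i b" by (simp add: ket_def)

lemma two_vec:
  assumes "finite D" "i \<in> D" "j \<in> D"
  shows "(\<Sum>a\<in>D. \<Sum>b\<in>D. (x * ket i a + y * ket j a) * cnj (x * ket i b + y * ket j b) * F a b)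
     = x * cnj x * F i i + x * cnj y * F i j + y * cnj x * F j i + y * cnj y * F j j"
proof -
  have inner: "(\<Sum>b\<in>D. (x * ket i a + y * ket j a) * cnj (x * ket i b + y * ket j b) * F a b)
      = (x * ket i a + y * ket j a) * (cnj x * F a i + cnj y * F a j)" for a
  proof -
    have "(\<Sum>b\<in>D. (x * ket i a + y * ket j a) * cnj (x * ket i b + y * ket j b) * F a b)
      = (x * ket i a + y * ket j a) * (\<Sum>b\<in>D. (cnj x * ket i b + cnj y * ket j b) * F a b)"
      by (simp add: sum_distrib_left cnj_ket mult_ac)
    then show ?thesis using sum_ket2[OF assms] by simp
  qed
  have "(\<Sum>a\<in>D. \<Sum>b\<in>D. (x * ket i a + y * ket j a) * cnj (x * ket i b + y * ket j b) * F a b)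
     = (\<Sum>a\<in>D. (x * ket i a + y * ket j a) * (cnj x * F a i + cnj y * F a j))"
    by (simp only: inner)
  also have "\<dots> = x * (cnj x * F i i + cnj y * F i j) + y * (cnj x * F j i + cnj y * F j j)"
    using sum_ket2[OF assms, of x y "\<lambda>a. cnj x * F a i + cnj y * F a j"] by simp
  finally show ?thesis by (simp add: ring_distribs mult_ac)
qed

lemma ket_quad:
  assumes "finite D" "i \<in> D"
  shows "(\<Sum>a\<in>D. \<Sum>b\<in>D. ket i a * cnj (ket i b) * F a b) = F i i"
proof -
  have "(\<Sum>b\<in>D. ket i a * cnj (ket i b) * F a b) = ket i a * F a i" for a
  proof -
    have "(\<Sum>b\<in>D. ket i a * cnj (ket i b) * F a b) = ket i a * (\<Sum>b\<in>D. F a b * ket i b)"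
      by (simp add: sum_distrib_left cnj_ket mult_ac)
    then show ?thesis using assms by (simp add: sum_ket)
  qed
  then have "(\<Sum>a\<in>D. \<Sum>b\<in>D. ket i a * cnj (ket i b) * F a b) = (\<Sum>a\<in>D. F a i * ket i a)"
    by (simp add: mult.commute)
  then show ?thesis using assms by (simp add: sum_ket)
qed

lemma two_vec_norm:
  assumes "finite D" "i \<in> D" "j \<in> D" "i \<noteq> j"
  shows "(\<Sum>a\<in>D. (cmod (x * ket i a + y * ket j a))\<^sup>2) = (cmod x)\<^sup>2 + (cmod y)\<^sup>2"
proof -
  have "(cmod (x * ket i a + y * ket j a))\<^sup>2 = (if a = i then (cmod x)\<^sup>2 else 0) + (if a = j then (cmod y)\<^sup>2 else 0)" for a
    using assms(4) by (auto simp: ket_def)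
  then have "(\<Sum>a\<in>D. (cmod (x * ket i a + y * ket j a))\<^sup>2) = (\<Sum>a\<in>D. if a = i then (cmod x)\<^sup>2 else 0) + (\<Sum>a\<in>D. if a = j then (cmod y)\<^sup>2 else 0)"
    by (simp only: sum.distrib)
  also have "\<dots> = (cmod x)\<^sup>2 + (cmod y)\<^sup>2"
    by (simp only: sum.delta assms(1) assms(2) assms(3) if_True)
  finally show ?thesis .
qed

lemma sum_if_mult: "finite A \<Longrightarrow> i \<in> A \<Longrightarrow> (\<Sum>a\<in>A. f a * (if a = i then c else 0)) = f i * (c::complex)"
proof -
  assume "finite A" "i \<in> A"
  have "\<And>a. f a * (if a = i then c else 0) = (if a = i then f a * c else 0)" by simp
  then show ?thesis using \<open>finite A\<close> \<open>i \<in> A\<close> by simp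
qed

lemma delta_ij:
  assumes "finite D" "a \<in> D" "b \<in> D"
  shows "(\<Sum>i\<in>D. \<Sum>j\<in>D. \<rho> i j * ((if a = i then c1 else 0) * cnj (if b = j then c2 else 0))) = \<rho> a b * (c1 * cnj c2)"
proof -
  have "(\<Sum>j\<in>D. \<rho> i j * ((if a = i then c1 else 0) * cnj (if b = j then c2 else 0))) = (if i = a then \<rho> a b * (c1 * cnj c2) else 0)" for i
  proof (cases "i = a")
    case True
    have "\<And>j. \<rho> i j * ((if a = i then c1 else 0) * cnj (if b = j then c2 else 0)) = (if j = b then \<rho> a b * (c1 * cnj c2) else 0)"
      using True by auto
    then show ?thesis using True assms by simp
  next
    case False then show ?thesis by simp
  qed
  then show ?thesis using assms by simp
qed

lemma delta2:
  assumes "finite A" "finite B" "s \<in> A"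
  shows "(\<Sum>t\<in>A. \<Sum>a\<in>B. \<Sum>b\<in>B. f t a b * (if a = b \<and> s = t then 1 else 0)) = (\<Sum>a\<in>B. f s a a :: complex)"
proof -
  have "(\<Sum>a\<in>B. \<Sum>b\<in>B. f t a b * (if a = b \<and> s = t then 1 else 0)) = (if t = s then (\<Sum>a\<in>B. f s a a) else 0)" for t
  proof (cases "t = s")
    case True
    have "\<And>a b. f t a b * (if a = b \<and> s = t then 1 else 0) = (if b = a then f s a a else 0)" using True by auto
    then show ?thesis using True assms by simp
  next
    case False then show ?thesis by auto
  qed
  then show ?thesis using assms by simp
qed

context qss
begin

lemma iso_recover:
  assumes Vi: "\<forall>i<d. \<forall>j<d. (\<Sum>X\<in>basis dims {..<n}. cnj (V X i) * V X j) = (if i = j then 1 else 0)"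
    and EV: "\<And>\<rho> X Y. X \<in> basis dims {..<n} \<Longrightarrow> Y \<in> basis dims {..<n} \<Longrightarrow>
          E \<rho> X Y = (\<Sum>i<d. \<Sum>j<d. V X i * \<rho> i j * cnj (V Y j))"
    and unauth: "unauthorized d n dims E Q"
  shows "authorized d n dims E ({..<n} - Q)"
proof -
  define P where "P = {..<n} - Q"
  have Q: "Q \<subseteq> {..<n}" using unauth unfolding unauthorized_def by blast
  have P: "P \<subseteq> {..<n}" by (simp add: P_def)
  have PQ: "{..<n} - P = Q" using Q by (auto simp: P_def)
  have PQd: "P \<inter> Q = {}" by (auto simp: P_def)
  let ?BP = "basis dims P" and ?BQ = "basis dims Q" and ?BN = "basis dims {..<n}"
  have finBP': "finite ?BP" using finBP[OF P] .
  have finBQ': "finite ?BQ" using finBP[OF Q] .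
  have d0: "0 < d" using d2 by simp
  have mg: "merge Q z x = merge P x z" if "x \<in> ?BP" "z \<in> ?BQ" for x z
    using merge_swap[OF that PQd] .
  have mgN: "merge P x z \<in> ?BN" if "x \<in> ?BP" "z \<in> ?BQ" for x z
    using merge_basis[OF that] P Q by (metis PQ Diff_partition)
  define A where "A i x z = V (merge P x z) i" for i x z
  define G where "G i j z z' = (\<Sum>x\<in>?BP. A i x z * cnj (A j x z'))" for i j z z'
  have T: "ptrace n dims Q (E (proj \<psi>)) z z' = (\<Sum>a<d. \<Sum>b<d. \<psi> a * cnj (\<psi> b) * G a b z z')"
    if "z \<in> ?BQ" "z' \<in> ?BQ" for \<psi> z z'
  proof -
    have "ptrace n dims Q (E (proj \<psi>)) z z' = (\<Sum>x\<in>?BP. E (proj \<psi>) (merge P x z) (merge P x z'))"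
      unfolding ptrace_def P_def[symmetric] using mg that by (intro sum.cong refl) simp
    also have "\<dots> = (\<Sum>x\<in>?BP. \<Sum>a<d. \<Sum>b<d. \<psi> a * cnj (\<psi> b) * (A a x z * cnj (A b x z')))"
      using EV mgN that by (intro sum.cong refl) (simp add: A_def proj_def mult_ac)
    also have "\<dots> = (\<Sum>a<d. \<Sum>b<d. \<psi> a * cnj (\<psi> b) * G a b z z')"
      unfolding G_def by (simp only: sum_distrib_left sum.swap[of _ ?BP "{..<d}"])
    finally show ?thesis .
  qed

  have unit_eq: "(\<Sum>a<d. \<Sum>b<d. \<psi> a * cnj (\<psi> b) * G a b z z') = G 0 0 z z'"
    if nrm: "(\<Sum>a<d. (cmod (\<psi> a))\<^sup>2) = 1" and z: "z \<in> ?BQ" "z' \<in> ?BQ" for \<psi> z z'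
  proof -
    have D1: "density {..<d} (proj \<psi>)" using pure_density[of "{..<d}" \<psi>] nrm by simp
    have D0: "density {..<d} (proj (ket 0))" using ket_density d0 by simp
    have "ptrace n dims Q (E (proj \<psi>)) z z' = ptrace n dims Q (E (proj (ket 0))) z z'"
      using unauth D1 D0 z unfolding unauthorized_def by blast
    moreover have "ptrace n dims Q (E (proj (ket 0))) z z' = G 0 0 z z'"
      using T[OF z, of "ket 0"] ket_quad[of "{..<d}" 0 "\<lambda>a b. G a b z z'"] d0 by simp
    ultimately show ?thesis using T[OF z] by simp
  qed
  have Gdiag: "G i i z z' = G 0 0 z z'" if "i < d" "z \<in> ?BQ" "z' \<in> ?BQ" for i z z'
    using unit_eq[OF _ that(2,3), of "ket i"] ket_norm[of "{..<d}" i] ket_quad[of "{..<d}" i "\<lambda>a b. G a b z z'"] that(1)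
    by simp
  have Goff: "G i j z z' = 0" if ij: "i < d" "j < d" "i \<noteq> j" and z: "z \<in> ?BQ" "z' \<in> ?BQ" for i j z z'
  proof -
    define r :: complex where "r = complex_of_real (1 / sqrt 2)"
    have rr: "r * cnj r = 1/2"
    proof -
      have "(1 / complex_of_real (sqrt 2))\<^sup>2 = 1/2" by (simp add: power_divide flip: of_real_power)
      then show ?thesis by (simp add: r_def power2_eq_square[symmetric])
    qed
    have cr: "(cmod r)\<^sup>2 = 1/2" by (simp add: r_def norm_divide power_divide)
    have cir: "(cmod (\<i> * r))\<^sup>2 = 1/2" using cr by (simp add: norm_mult)
    have fin: "finite {..<d}" "i \<in> {..<d}" "j \<in> {..<d}" using ij by auto
    have e1: "r * cnj r * G i i z z' + r * cnj r * G i j z z' + r * cnj r * G j i z z' + r * cnj r * G j j z z' = G 0 0 z z'"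
    proof -
      have "(\<Sum>a<d. (cmod (r * ket i a + r * ket j a))\<^sup>2) = 1"
        using two_vec_norm[OF fin ij(3), of r r] cr by simp
      from unit_eq[OF this z] show ?thesis using two_vec[OF fin, of r r "\<lambda>a b. G a b z z'"] by simp
    qed
    have e2: "r * cnj r * G i i z z' + r * cnj (\<i> * r) * G i j z z' + \<i> * r * cnj r * G j i z z' + \<i> * r * cnj (\<i> * r) * G j j z z' = G 0 0 z z'"
    proof -
      have "(\<Sum>a<d. (cmod (r * ket i a + (\<i> * r) * ket j a))\<^sup>2) = 1"
        using two_vec_norm[OF fin ij(3), of r "\<i> * r"] cr cir by simp
      from unit_eq[OF this z] show ?thesis using two_vec[OF fin, of r "\<i> * r" "\<lambda>a b. G a b z z'"] by simp
    qed
    have gi: "G i i z z' = G 0 0 z z'" using Gdiag[of i z z'] ij z by blast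
    have gj: "G j j z z' = G 0 0 z z'" using Gdiag[of j z z'] ij z by blast
    have s1: "G i j z z' + G j i z z' = 0" using e1 rr gi gj by (simp add: field_simps)
    have "cnj (\<i> * r) = - \<i> * cnj r" by simp
    then have s2: "- \<i> * G i j z z' + \<i> * G j i z z' = 0" using e2 rr gi gj by (simp add: field_simps)
    from s1 s2 show ?thesis by (simp add: field_simps)
  qed
  have Gd: "G i j z z' = (if i = j then G 0 0 z z' else 0)" if "i < d" "j < d" "z \<in> ?BQ" "z' \<in> ?BQ" for i j z z'
  proof (cases "i = j")
    case True then show ?thesis using Gdiag[of i z z'] that by simp
  next
    case False then show ?thesis using Goff[of i j z z'] that by simp
  qed
  define comb where "comb i \<alpha> x = (\<Sum>z\<in>?BQ. \<alpha> z * A i x z)" for i \<alpha> x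
  have comb_ip0: "ip ?BP (comb i \<alpha>) (comb j \<beta>) = (\<Sum>z\<in>?BQ. \<Sum>z'\<in>?BQ. cnj (\<alpha> z) * \<beta> z' * G j i z' z)" for i j \<alpha> \<beta>
  proof -
    have "ip ?BP (comb i \<alpha>) (comb j \<beta>) = (\<Sum>x\<in>?BP. \<Sum>z\<in>?BQ. \<Sum>z'\<in>?BQ. cnj (\<alpha> z) * \<beta> z' * (A j x z' * cnj (A i x z)))"
      unfolding ip_def comb_def cnj_sum sum_product by (simp add: mult_ac)
    also have "\<dots> = (\<Sum>z\<in>?BQ. \<Sum>z'\<in>?BQ. cnj (\<alpha> z) * \<beta> z' * G j i z' z)"
      unfolding G_def by (simp only: sum_distrib_left sum.swap[of _ ?BP ?BQ])
    finally show ?thesis .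
  qed
  have comb_ip: "ip ?BP (comb i \<alpha>) (comb j \<beta>) = (if i = j then ip ?BP (comb 0 \<alpha>) (comb 0 \<beta>) else 0)"
    if "i < d" "j < d" for i j \<alpha> \<beta>
  proof -
    have "(\<Sum>z\<in>?BQ. \<Sum>z'\<in>?BQ. cnj (\<alpha> z) * \<beta> z' * G j i z' z) = (\<Sum>z\<in>?BQ. \<Sum>z'\<in>?BQ. cnj (\<alpha> z) * \<beta> z' * (if j = i then G 0 0 z' z else 0))"
      using Gd that by (intro sum.cong refl) simp
    then show ?thesis using comb_ip0[of i \<alpha> j \<beta>] comb_ip0[of 0 \<alpha> 0 \<beta>] by (cases "i = j") auto
  qed
  obtain r fs cs where on: "\<forall>s<(r::nat). \<forall>t<r. ip ?BP (fs s) (fs t) = (if s = t then 1 else 0)"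
    and sp: "\<forall>s<r. \<forall>x\<in>?BP. fs s x = (\<Sum>z\<in>?BQ. cs s z * A 0 x z)"
    and ex: "\<forall>z\<in>?BQ. \<forall>x\<in>?BP. A 0 x z = (\<Sum>s<r. ip ?BP (fs s) (\<lambda>x. A 0 x z) * fs s x)"
    using gram_schmidt[OF finBP' finBQ', of "\<lambda>z x. A 0 x z"] by blast
  define h where "h i s = comb i (cs s)" for i s
  have h0: "h 0 s x = fs s x" if "s < r" "x \<in> ?BP" for s x
    using sp that by (simp add: h_def comb_def)
  have hon: "ip ?BP (h i s) (h j t) = (if i = j \<and> s = t then 1 else 0)"
    if "i < d" "j < d" "s < r" "t < r" for i j s t
  proof -
    have "ip ?BP (h 0 s) (h 0 t) = ip ?BP (fs s) (fs t)"
      using h0 that by (simp add: ip_def)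
    then have h00: "ip ?BP (comb 0 (cs s)) (comb 0 (cs t)) = (if s = t then 1 else 0)"
      using on that by (simp add: h_def)
    show ?thesis using comb_ip[of i j "cs s" "cs t"] h00 that unfolding h_def
      by (cases "i = j") simp_all
  qed
  define coef where "coef t z = ip ?BP (fs t) (\<lambda>x. A 0 x z)" for t z
  have expA: "A i x z = (\<Sum>t<r. coef t z * h i t x)" if "i < d" "z \<in> ?BQ" "x \<in> ?BP" for i x z
  proof -
    define \<alpha> where "\<alpha> z'' = (if z'' = z then 1 else 0) - (\<Sum>t<r. coef t z * cs t z'')" for z''
    have ca: "comb i' \<alpha> x' = A i' x' z - (\<Sum>t<r. coef t z * h i' t x')" for i' x'
    proof -
      have "comb i' \<alpha> x' = (\<Sum>z''\<in>?BQ. (if z'' = z then 1 else 0) * A i' x' z'') - (\<Sum>z''\<in>?BQ. (\<Sum>t<r. coef t z * cs t z'') * A i' x' z'')"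
        unfolding comb_def \<alpha>_def by (simp add: left_diff_distrib sum_subtractf)
      also have "(\<Sum>z''\<in>?BQ. (if z'' = z then 1 else 0) * A i' x' z'') = A i' x' z"
      proof -
        have "\<And>z''. (if z'' = z then 1 else 0) * A i' x' z'' = (if z'' = z then A i' x' z'' else 0)" by simp
        then show ?thesis using that(2) finBQ' by simp
      qed
      also have "(\<Sum>z''\<in>?BQ. (\<Sum>t<r. coef t z * cs t z'') * A i' x' z'') = (\<Sum>t<r. coef t z * h i' t x')"
        unfolding h_def comb_def
        by (simp only: sum_distrib_left sum_distrib_right sum.swap[of _ ?BQ "{..<r}"]) (simp add: mult_ac)
      finally show ?thesis .
    qed
    have c0: "comb 0 \<alpha> x' = 0" if "x' \<in> ?BP" for x'
    proof -
      have "(\<Sum>t<r. coef t z * h 0 t x') = (\<Sum>t<r. coef t z * fs t x')"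
        using h0 that by (intro sum.cong refl) simp
      then show ?thesis using ca[of 0 x'] ex that \<open>z \<in> ?BQ\<close> by (simp add: coef_def)
    qed
    have "ip ?BP (comb i \<alpha>) (comb i \<alpha>) = ip ?BP (comb 0 \<alpha>) (comb 0 \<alpha>)"
      using comb_ip[of i i \<alpha> \<alpha>] that by simp
    also have "\<dots> = 0" unfolding ip_def using c0 by simp
    finally have "comb i \<alpha> x = 0" using ip_self_zero[OF finBP' _ that(3)] by blast
    then show ?thesis using ca by simp
  qed
  have ip_hA: "ip ?BP (h a s) (\<lambda>x. A i x z) = (if a = i then coef s z else 0)"
    if "a < d" "i < d" "s < r" "z \<in> ?BQ" for a i s z
  proof -
    have "ip ?BP (h a s) (\<lambda>x. A i x z) = ip ?BP (h a s) (\<lambda>x. \<Sum>t<r. coef t z * h i t x)"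
      using expA that by (intro ip_cong2) simp
    also have "\<dots> = (\<Sum>t<r. coef t z * (if a = i \<and> s = t then 1 else 0))"
      using hon that by (simp add: ip_lin2)
    also have "\<dots> = (if a = i then coef s z else 0)"
      using that by (cases "a = i") (simp_all add: if_distrib cong: if_cong)
    finally show ?thesis .
  qed
  have parseval: "(\<Sum>s<r. \<Sum>z\<in>?BQ. coef s z * cnj (coef s z)) = 1"
  proof -
    have pz: "(\<Sum>s<r. coef s z * cnj (coef s z)) = (\<Sum>x\<in>?BP. cnj (A 0 x z) * A 0 x z)" if "z \<in> ?BQ" for z
    proof -
      have "(\<Sum>x\<in>?BP. cnj (A 0 x z) * A 0 x z) = ip ?BP (\<lambda>x. A 0 x z) (\<lambda>x. A 0 x z)" by (simp add: ip_def)
      also have "\<dots> = ip ?BP (\<lambda>x. A 0 x z) (\<lambda>x. \<Sum>t<r. coef t z * fs t x)"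
        using ex that by (intro ip_cong2) (simp add: coef_def)
      also have "\<dots> = (\<Sum>t<r. coef t z * cnj (coef t z))"
      proof -
        have "ip ?BP (\<lambda>x. A 0 x z) (fs t) = cnj (coef t z)" for t
          unfolding coef_def by (rule ip_cnj)
        then show ?thesis by (simp add: ip_lin2)
      qed
      finally show ?thesis by simp
    qed
    have "(\<Sum>s<r. \<Sum>z\<in>?BQ. coef s z * cnj (coef s z)) = (\<Sum>z\<in>?BQ. \<Sum>s<r. coef s z * cnj (coef s z))"
      by (rule sum.swap)
    also have "\<dots> = (\<Sum>z\<in>?BQ. \<Sum>x\<in>?BP. cnj (A 0 x z) * A 0 x z)"
      using pz by (intro sum.cong refl) simp
    also have "\<dots> = (\<Sum>x\<in>?BP. \<Sum>z\<in>?BQ. cnj (V (merge P x z) 0) * V (merge P x z) 0)"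
      unfolding A_def by (rule sum.swap)
    also have "\<dots> = (\<Sum>X\<in>?BN. cnj (V X 0) * V X 0)"
      using sum_split_N[OF P, where dims=dims and f="\<lambda>X. cnj (V X 0) * V X 0"] PQ by simp
    also have "\<dots> = 1" using Vi d0 by simp
    finally show ?thesis .
  qed
  define Pi where "Pi x x' = (\<Sum>s<r. \<Sum>a<d. h a s x * cnj (h a s x'))" for x x'
  have Pi_herm: "cnj (Pi x x') = Pi x' x" for x x' by (simp add: Pi_def mult.commute)
  have Pi_idem: "(\<Sum>x0\<in>?BP. Pi x x0 * Pi x0 x') = Pi x x'" for x x'
  proof -
    have "(\<Sum>x0\<in>?BP. Pi x x0 * Pi x0 x') = (\<Sum>s<r. \<Sum>t<r. \<Sum>a<d. \<Sum>b<d. h a s x * cnj (h b t x') * (\<Sum>x0\<in>?BP. cnj (h a s x0) * h b t x0))"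
      unfolding Pi_def sum_product
      by (simp only: sum_distrib_left sum.swap[of _ ?BP "{..<r}"] sum.swap[of _ ?BP "{..<d}"]) (simp add: mult_ac)
    also have "\<dots> = (\<Sum>s<r. \<Sum>t<r. \<Sum>a<d. \<Sum>b<d. h a s x * cnj (h b t x') * (if a = b \<and> s = t then 1 else 0))"
      using hon by (intro sum.cong refl) (simp add: ip_def)
    also have "\<dots> = (\<Sum>s<r. \<Sum>a<d. h a s x * cnj (h a s x'))"
      by (rule sum.cong[OF refl], rule delta2) auto
    finally show ?thesis by (simp add: Pi_def)
  qed
  have Pi_A: "(\<Sum>x\<in>?BP. Pi x0 x * A i x z) = A i x0 z" if "x0 \<in> ?BP" "i < d" "z \<in> ?BQ" for x0 i z
  proof -
    have "(\<Sum>x\<in>?BP. Pi x0 x * A i x z) = (\<Sum>s<r. \<Sum>a<d. h a s x0 * ip ?BP (h a s) (\<lambda>x. A i x z))"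
      unfolding Pi_def ip_def
      by (simp only: sum_distrib_left sum_distrib_right sum.swap[of _ ?BP "{..<r}"] sum.swap[of _ ?BP "{..<d}"]) (simp add: mult_ac)
    also have "\<dots> = (\<Sum>s<r. \<Sum>a<d. h a s x0 * (if a = i then coef s z else 0))"
      using ip_hA that by (intro sum.cong refl) simp
    also have "\<dots> = (\<Sum>s<r. h i s x0 * coef s z)"
      using that by (intro sum.cong refl) (simp add: sum_if_mult)
    also have "\<dots> = A i x0 z" using expA[OF that(2,3,1)] by (simp add: mult.commute)
    finally show ?thesis .
  qed
  define NB where "NB = card ?BP"
  obtain en where en: "bij_betw en {..<NB} ?BP"
    using ex_bij_betw_nat_finite[OF finBP'] by (auto simp: NB_def atLeast0LessThan)
  have enB: "en t \<in> ?BP" if "t < NB" for t using en that by (auto simp: bij_betw_def)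
  define L where "L l a x = (if l < r then cnj (h a l x) else if a = 0 then (if x = en (l - r) then 1 else 0) - Pi (en (l - r)) x else 0)" for l a x
  have LC: "\<forall>x\<in>?BP. \<forall>x'\<in>?BP. (\<Sum>l<r + NB. \<Sum>a\<in>{..<d}. cnj (L l a x) * L l a x') = (if x = x' then 1 else 0)"
  proof (intro ballI)
    fix x x' assume x: "x \<in> ?BP" and x': "x' \<in> ?BP"
    have p1: "(\<Sum>l<r. \<Sum>a\<in>{..<d}. cnj (L l a x) * L l a x') = Pi x x'"
      unfolding Pi_def L_def by simp
    have p2a: "(\<Sum>a\<in>{..<d}. cnj (L (r + t) a x) * L (r + t) a x')
        = cnj ((if x = en t then 1 else 0) - Pi (en t) x) * ((if x' = en t then 1 else 0) - Pi (en t) x')" for t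
    proof -
      have "\<And>a. cnj (L (r + t) a x) * L (r + t) a x' = (if a = 0 then cnj ((if x = en t then 1 else 0) - Pi (en t) x) * ((if x' = en t then 1 else 0) - Pi (en t) x') else 0)"
        by (simp add: L_def)
      then show ?thesis using d0 by simp
    qed
    have "(\<Sum>t<NB. \<Sum>a\<in>{..<d}. cnj (L (r + t) a x) * L (r + t) a x')
        = (\<Sum>t<NB. (\<lambda>x0. cnj ((if x = x0 then 1 else 0) - Pi x0 x) * ((if x' = x0 then 1 else 0) - Pi x0 x')) (en t))"
      using p2a by (simp add: eq_commute)
    also have "\<dots> = (\<Sum>x0\<in>?BP. cnj ((if x = x0 then 1 else 0) - Pi x0 x) * ((if x' = x0 then 1 else 0) - Pi x0 x'))"
      by (rule sum.reindex_bij_betw[OF en])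
    also have "\<dots> = (\<Sum>x0\<in>?BP. (if x = x0 then 1 else 0) * (if x' = x0 then 1 else 0) - (if x = x0 then 1 else 0) * Pi x0 x'
         - Pi x x0 * (if x' = x0 then 1 else 0) + Pi x x0 * Pi x0 x')"
      by (intro sum.cong refl) (simp add: Pi_herm algebra_simps)
    also have "\<dots> = (if x = x' then 1 else 0) - Pi x x' - Pi x x' + Pi x x'"
    proof -
      have "(\<Sum>x0\<in>?BP. (if x = x0 then 1 else 0) * (if x' = x0 then (1::complex) else 0)) = (if x = x' then 1 else 0)"
      proof -
        have "\<And>x0. (if x = x0 then 1 else 0) * (if x' = x0 then (1::complex) else 0) = (if x0 = x then (if x = x' then 1 else 0) else 0)" by auto
        then show ?thesis using x finBP' by simp
      qed
      moreover have "(\<Sum>x0\<in>?BP. (if x = x0 then 1 else 0) * Pi x0 x') = Pi x x'"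
      proof -
        have "\<And>x0. (if x = x0 then 1 else 0) * Pi x0 x' = (if x0 = x then Pi x x' else 0)" by auto
        then show ?thesis using x finBP' by simp
      qed
      moreover have "(\<Sum>x0\<in>?BP. Pi x x0 * (if x' = x0 then 1 else 0)) = Pi x x'"
      proof -
        have "\<And>x0. Pi x x0 * (if x' = x0 then 1 else 0) = (if x0 = x' then Pi x x' else 0)" by auto
        then show ?thesis using x' finBP' by simp
      qed
      ultimately show ?thesis using Pi_idem[of x x'] by (simp add: sum.distrib sum_subtractf)
    qed
    finally have p2: "(\<Sum>t<NB. \<Sum>a\<in>{..<d}. cnj (L (r + t) a x) * L (r + t) a x') = (if x = x' then 1 else 0) - Pi x x'"
      by simp
    show "(\<Sum>l<r + NB. \<Sum>a\<in>{..<d}. cnj (L l a x) * L l a x') = (if x = x' then 1 else 0)"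
      unfolding sum_lessThan_add using p1 p2 by simp
  qed
  define W where "W l a i z = (\<Sum>x\<in>?BP. L l a x * A i x z)" for l a i z
  have Wlt: "W l a i z = (if a = i then coef l z else 0)" if "l < r" "a < d" "i < d" "z \<in> ?BQ" for l a i z
    using ip_hA[OF that(2,3,1,4)] that(1) by (simp add: W_def L_def ip_def)
  have Wge: "W (r + t) a i z = 0" if "t < NB" "i < d" "z \<in> ?BQ" for t a i z
  proof (cases "a = 0")
    case True
    have "W (r + t) a i z = (\<Sum>x\<in>?BP. (if x = en t then 1 else 0) * A i x z) - (\<Sum>x\<in>?BP. Pi (en t) x * A i x z)"
      unfolding W_def L_def using True by (simp add: left_diff_distrib sum_subtractf)
    also have "(\<Sum>x\<in>?BP. (if x = en t then 1 else 0) * A i x z) = A i (en t) z"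
    proof -
      have "\<And>x. (if x = en t then 1 else 0) * A i x z = (if x = en t then A i (en t) z else 0)" by simp
      then show ?thesis using enB[OF that(1)] finBP' by simp
    qed
    also have "(\<Sum>x\<in>?BP. Pi (en t) x * A i x z) = A i (en t) z" using Pi_A[OF enB[OF that(1)] that(2,3)] .
    finally show ?thesis by simp
  next
    case False then show ?thesis by (simp add: W_def L_def)
  qed
  have rec: "kmap (r + NB) L ?BP (ptrace n dims P (E \<rho>)) a b = \<rho> a b"
    if dens: "density {..<d} \<rho>" and ab: "a < d" "b < d" for \<rho> a b
  proof -
    define \<sigma> where "\<sigma> x y = (\<Sum>z\<in>?BQ. \<Sum>i<d. \<Sum>j<d. A i x z * \<rho> i j * cnj (A j y z))" for x y
    have pt: "ptrace n dims P (E \<rho>) x y = \<sigma> x y" if "x \<in> ?BP" "y \<in> ?BP" for x y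
      unfolding ptrace_def \<sigma>_def PQ using EV mgN that by (intro sum.cong refl) (simp add: A_def)
    have "kmap (r + NB) L ?BP (ptrace n dims P (E \<rho>)) a b = kmap (r + NB) L ?BP \<sigma> a b"
      using kmap_cong[of ?BP "ptrace n dims P (E \<rho>)" \<sigma> "r + NB" L, OF pt] by simp
    also have "\<dots> = (\<Sum>l<r + NB. \<Sum>z\<in>?BQ. \<Sum>i<d. \<Sum>j<d. \<rho> i j * (W l a i z * cnj (W l b j z)))"
      unfolding kmap_def \<sigma>_def W_def cnj_sum sum_product
      by (simp only: sum_distrib_left sum_distrib_right sum.swap[of _ ?BP ?BQ] sum.swap[of _ ?BP "{..<d}"]) (simp add: mult_ac)
    also have "\<dots> = (\<Sum>l<r. \<Sum>z\<in>?BQ. \<Sum>i<d. \<Sum>j<d. \<rho> i j * ((if a = i then coef l z else 0) * cnj (if b = j then coef l z else 0)))"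
      unfolding sum_lessThan_add using Wlt Wge ab by simp
    also have "\<dots> = (\<Sum>l<r. \<Sum>z\<in>?BQ. \<rho> a b * (coef l z * cnj (coef l z)))"
      using ab by (intro sum.cong refl) (rule delta_ij, auto)
    also have "\<dots> = \<rho> a b * (\<Sum>l<r. \<Sum>z\<in>?BQ. coef l z * cnj (coef l z))"
      by (simp add: sum_distrib_left)
    also have "\<dots> = \<rho> a b" using parseval by simp
    finally show ?thesis .
  qed
  have "is_channel ?BP {..<d} (kmap (r + NB) L ?BP)"
    unfolding is_channel_iff using LC by blast
  then show ?thesis unfolding authorized_def P_def[symmetric] using P rec by blast
qed

end



context qss
begin

lemma pure_unauth_compl_auth:
  assumes pure: "pure_qss d n dims E" and auth: "authorized d n dims E P0"
    and un: "unauthorized d n dims E Q"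
  shows "authorized d n dims E ({..<n} - Q)"
  apply (rule pure_iso[OF pure auth])
  apply (rule iso_recover[OF _ _ un])
   apply assumption+
  done

lemma main:
  assumes ne: "access_structure d n dims E \<noteq> {}"
  shows "n \<le> t_min d n dims E + z_max d n dims E \<and>
         (pure_qss d n dims E \<longrightarrow> n = t_min d n dims E + z_max d n dims E)"
proof -
  obtain P0 where au0: "authorized d n dims E P0" using ne unfolding access_structure_def by blast
  have P0: "P0 \<subseteq> {..<n}" using au0 unfolding authorized_def by blast
  have cP0: "card P0 \<le> n" using card_mono[OF _ P0] by simp
  define Pt where "Pt t = (\<forall>P\<subseteq>{..<n}. t \<le> card P \<longrightarrow> authorized d n dims E P)" for t
  define Pz where "Pz z = (\<forall>P\<subseteq>{..<n}. card P \<le> z \<longrightarrow> unauthorized d n dims E P)" for z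
  have tdef: "t_min d n dims E = (LEAST t. Pt t)" unfolding t_min_def Pt_def by simp
  have zdef: "z_max d n dims E = (GREATEST z. Pz z)" unfolding z_max_def Pz_def by simp
  have Ptn: "Pt (n + 1)"
    unfolding Pt_def
  proof (intro allI impI)
    fix P assume "P \<subseteq> {..<n}" "n + 1 \<le> card P"
    moreover have "card P \<le> n" using card_mono[OF _ \<open>P \<subseteq> {..<n}\<close>] by simp
    ultimately show "authorized d n dims E P" by simp
  qed
  have Pz0: "Pz 0"
    unfolding Pz_def
  proof (intro allI impI)
    fix P assume "P \<subseteq> {..<n}" "card P \<le> 0"
    then have "P = {}" using finite_subset[of P "{..<n}"] by auto
    then show "unauthorized d n dims E P" using empty_unauth by simp
  qed
  have Pzb: "z < card P0" if "Pz z" for z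
  proof (rule ccontr)
    assume "\<not> z < card P0"
    then have "unauthorized d n dims E P0" using that P0 unfolding Pz_def by auto
    then show False using not_auth_unauth au0 by blast
  qed
  have Pzb': "z \<le> card P0" if "Pz z" for z using Pzb[OF that] by simp
  let ?T = "t_min d n dims E" and ?Z = "z_max d n dims E"
  have PtT: "Pt ?T" unfolding tdef by (rule LeastI[of Pt, OF Ptn])
  have PzZ: "Pz ?Z" unfolding zdef by (rule GreatestI_nat[of Pz 0 "card P0", OF Pz0 Pzb'])
  have Zle: "z \<le> ?Z" if "Pz z" for z unfolding zdef by (rule Greatest_le_nat[of Pz z "card P0", OF that Pzb'])
  have Tle: "?T \<le> t" if "Pt t" for t unfolding tdef by (rule Least_le[of Pt, OF that])
  have ZP0: "?Z < card P0" using Pzb[OF PzZ] .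
  have cardc: "card ({..<n} - P) = n - card P" if "P \<subseteq> {..<n}" for P
    using card_Diff_subset[OF finite_subset[OF that] that] by simp
  have part1: "n \<le> ?T + ?Z"
  proof (cases "n \<le> ?T")
    case True then show ?thesis by simp
  next
    case False
    have "Pz (n - ?T)"
      unfolding Pz_def
    proof (intro allI impI)
      fix P assume P: "P \<subseteq> {..<n}" and c: "card P \<le> n - ?T"
      have "?T \<le> card ({..<n} - P)" using cardc[OF P] c False by simp
      then have "authorized d n dims E ({..<n} - P)" using PtT[unfolded Pt_def, rule_format, of "{..<n} - P"] by simp
      then have "unauthorized d n dims E ({..<n} - ({..<n} - P))" by (rule auth_compl_unauth)
      then show "unauthorized d n dims E P" using compl_compl[OF P] by simp
    qed
    then have "n - ?T \<le> ?Z" by (rule Zle)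
    then show ?thesis by simp
  qed
  have part2: "n = ?T + ?Z" if pure: "pure_qss d n dims E"
  proof -
    have "Pt (n - ?Z)"
      unfolding Pt_def
    proof (intro allI impI)
      fix P assume P: "P \<subseteq> {..<n}" and c: "n - ?Z \<le> card P"
      have "card ({..<n} - P) \<le> ?Z" using cardc[OF P] c by simp
      then have "unauthorized d n dims E ({..<n} - P)" using PzZ[unfolded Pz_def, rule_format, of "{..<n} - P"] by simp
      then have "authorized d n dims E ({..<n} - ({..<n} - P))"
        by (rule pure_unauth_compl_auth[OF pure au0])
      then show "authorized d n dims E P" using compl_compl[OF P] by simp
    qed
    then have "?T \<le> n - ?Z" by (rule Tle)
    then show ?thesis using part1 ZP0 cP0 by simp
  qed
  show ?thesis using part1 part2 by blast
qed

end

theorem lemma3: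
  fixes d n :: nat and dims :: "nat \<Rightarrow> nat"
    and E :: "(nat \<Rightarrow> nat \<Rightarrow> complex) \<Rightarrow> ((nat \<Rightarrow> nat) \<Rightarrow> (nat \<Rightarrow> nat) \<Rightarrow> complex)"
  assumes "qss_scheme d n dims E"
    and "access_structure d n dims E \<noteq> {}"
  shows "n \<le> t_min d n dims E + z_max d n dims E \<and>
         (pure_qss d n dims E \<longrightarrow> n = t_min d n dims E + z_max d n dims E)"
proof -
  have d2: "2 \<le> d" and ch: "is_channel {..<d} (basis dims {..<n}) E"
    using assms(1) unfolding qss_scheme_def by auto
  obtain m K where Kc: "\<forall>i\<in>{..<d}. \<forall>j\<in>{..<d}. (\<Sum>k<m. \<Sum>x\<in>basis dims {..<n}. cnj (K k x i) * K k x j) = (if i = j then 1 else 0)"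
    and EK: "E = kmap m K {..<d}"
    using ch unfolding is_channel_iff by blast
  interpret qss d n dims m K using d2 Kc by unfold_locales
  show ?thesis using main assms(2) unfolding EK by blast
qed


end
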